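(* Let $\mathcal{G}$ be a parity game with a nonempty vertex set and let $T$ be a finite set of tangles of $\mathcal{G}$. Then $\mathtt{search}(\mathcal{G},T)$ (defined in the context) terminates and returns a pair $(T'',t)$ where $t$ is a tangle that is a dominion of $\mathcal{G}$ for the player $\alpha\equiv\mathrm{pr}(t)\pmod 2$.
   Context: Parity games: $\mathcal{G}=(V_0,V_1,E,\mathrm{pr})$, $V=V_0\cup V_1$ finite, partitioned into vertices of Even ($0$) and Odd ($1$); $E\subseteq V\times V$ with every vertex having a successor; $\mathrm{pr}:V\to\{0,\dots,d\}$. $E(u)=\{v:(u,v)\in E\}$, $\mathrm{pr}(U)=\max_{u\in U}\mathrm{pr}(u)$, $\mathrm{pr}^{-1}(p)$ the set of vertices of priority $p$, $\overline{\alpha}=1-\alpha$. A play (infinite path) is won by Even iff the highest priority occurring infinitely often is even, otherwise by Odd; a cycle is won by $\alpha$ if its highest priority has parity $\alpha$. A strategy of $\alpha$ is a partial function $\sigma$ on $V_\alpha$ with $\sigma(v)\in E(v)$; a play is consistent with $\sigma$ if every vertex $v\in\mathrm{dom}(\sigma)$ on it is followed by $\sigma(v)$. A dominion of $\alpha$ is a set $D$ for which $\alpha$ has a strategy $\sigma$ such that all plays starting in $D$ consistent with $\sigma$ stay in $D$ and are won by $\alpha$. For $U\subseteq V$, $\mathcal{G}\cap U$ is the subgame with vertices $V\cap U$ and edges $E\cap(U\times U)$, and $\mathcal{G}\setminus U=\mathcal{G}\cap(V\setminus U)$. A $p$-tangle is a nonempty $U\subseteq V$ with $p=\mathrm{pr}(U)$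 such that for $\alpha\equiv p\pmod 2$ there is a strategy $\sigma:U\cap V_\alpha\to U$ (witness strategy $\sigma_T(U)$) with $(U,E\cap(\sigma\cup((U\cap V_{\overline{\alpha}})\times U)))$ strongly connected and all its cycles won by $\alpha$ ("won by $\alpha$"). For a tangle $t$ won by $\alpha$ in a game with edge set $E$, $E_T(t)=\{v\notin t:\exists u\in t\cap V_{\overline{\alpha}},(u,v)\in E\}$. $T_\alpha$ denotes the tangles of $T$ won by $\alpha$; for a subgame $\mathcal{G}'$, $T\cap\mathcal{G}'$ denotes the tangles of $T$ contained in its vertex set. Tangle attractor: for a game $\mathcal{G}$ with vertices $V$, tangles $T$, player $\alpha$ and $A\subseteq V$, $\mathit{TAttr}^{\mathcal{G},T}_\alpha(A)$ is the least $Z\supseteq A$ containing every $v\in V_\alpha$ with $E(v)\cap Z\neq\emptyset$, every $v\in V_{\overline{\alpha}}$ with $E(v)\subseteq Z$, and every vertex of every $t\in T_\alpha$ with $\emptyset\neq E_T(t)\subseteq Z$ ($E_T$ computed in $\mathcal{G}$). It is computed iteratively together with a strategy $\sigma$ of $\alpha$ (initially empty): when an $\alpha$-vertex is added individually, $\sigma$ maps it to a successor already in $Z$; each $\alpha$-vertex of $A$ gets as $\sigma$-value a successor in $Z$ once one exists; when the vertices of a tangle $t$ are added, $\sigma(u):=\sigma_T(t)(u)$ for every $\alpha$-vertex $u\in t$ not yet in $\mathrm{dom}(\sigma)$. extract-tangles$(Z,\sigma)$, for a subgame $\mathcal{G}'=(V',E')$ with top priority $p$, $\alpha\equiv p$,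 region $Z\subseteq V'$ and strategy $\sigma$: let $Y_Z$ be the greatest $X\subseteq Z$ such that every $v\in X\cap V_{\overline{\alpha}}$ has $E'(v)\subseteq X$ and every $v\in X\cap V_\alpha$ has $\sigma(v)\in X$; let $H$ be the graph on $Y_Z$ with edges $(v,\sigma(v))$ for $v\in Y_Z\cap V_\alpha$ and $(v,w)\in E'$ for $v\in Y_Z\cap V_{\overline{\alpha}}$; return all bottom strongly connected components of $H$ that contain at least one edge of $H$, each with witness strategy $\sigma$ restricted to it. $\mathtt{search}(\mathcal{G},T)$: repeat forever: set $r:=\emptyset$ (a partial function $V\to\mathbb{N}$, the region function) and $Y:=\emptyset$; while $V\setminus\mathrm{dom}(r)\neq\emptyset$: let $\mathcal{G}':=\mathcal{G}\setminus\mathrm{dom}(r)$ with vertex set $V'$, $T':=T\cap\mathcal{G}'$, $p:=\mathrm{pr}(\mathcal{G}')$, $\alpha:=p\bmod 2$; compute $(Z,\sigma):=\mathit{TAttr}^{\mathcal{G}',T'}_\alpha(\mathrm{pr}^{-1}(p)\cap V')$ (the region of priority $p$); let $A:=$ extract-tangles$(Z,\sigma)$; if some $t\in A$ has $E_T(t)=\emptyset$ with $E_T$ computed in the full game $\mathcal{G}$, return $(T\cup Y,t)$; otherwise set $r(v):=p$ for all $v\in Z$ and $Y:=Y\cup A$. After the while-loop, set $T:=T\cup Y$. *)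

theory Defs
  imports Main "HOL-Library.Infinite_Set"
begin

text \<open>Players are encoded as the natural numbers 0 (Even) and 1 (Odd).\<close>

definition parity_game :: "'v set \<Rightarrow> 'v set \<Rightarrow> ('v \<times> 'v) set \<Rightarrow> ('v \<Rightarrow> nat) \<Rightarrow> bool" where
  "parity_game V V0 E pr \<longleftrightarrow> finite V \<and> V0 \<subseteq> V \<and> E \<subseteq> V \<times> V \<and> (\<forall>v\<in>V. \<exists>w. (v, w) \<in> E)"

definition player_vs :: "'v set \<Rightarrow> 'v set \<Rightarrow> nat \<Rightarrow> 'v set" where
  "player_vs V V0 \<alpha> = (if \<alpha> = 0 then V \<inter> V0 else V - V0)"

definition strategy :: "'v set \<Rightarrow> 'v set \<Rightarrow> ('v \<times> 'v) set \<Rightarrow> nat \<Rightarrow> ('v \<rightharpoonup> 'v) \<Rightarrow> bool" where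
  "strategy V V0 E \<alpha> \<sigma> \<longleftrightarrow> dom \<sigma> \<subseteq> player_vs V V0 \<alpha> \<and> (\<forall>v w. \<sigma> v = Some w \<longrightarrow> (v, w) \<in> E)"

definition play :: "'v set \<Rightarrow> ('v \<times> 'v) set \<Rightarrow> (nat \<Rightarrow> 'v) \<Rightarrow> bool" where
  "play V E \<pi> \<longleftrightarrow> (\<forall>i. \<pi> i \<in> V \<and> (\<pi> i, \<pi> (Suc i)) \<in> E)"

definition consistent :: "('v \<rightharpoonup> 'v) \<Rightarrow> (nat \<Rightarrow> 'v) \<Rightarrow> bool" where
  "consistent \<sigma> \<pi> \<longleftrightarrow> (\<forall>i. \<pi> i \<in> dom \<sigma> \<longrightarrow> \<sigma> (\<pi> i) = Some (\<pi> (Suc i)))"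

definition wins_play :: "('v \<Rightarrow> nat) \<Rightarrow> nat \<Rightarrow> (nat \<Rightarrow> 'v) \<Rightarrow> bool" where
  "wins_play pr \<alpha> \<pi> \<longleftrightarrow> Max {p. \<exists>\<^sub>\<infinity> i. pr (\<pi> i) = p} mod 2 = \<alpha>"

definition dominion :: "'v set \<Rightarrow> 'v set \<Rightarrow> ('v \<times> 'v) set \<Rightarrow> ('v \<Rightarrow> nat) \<Rightarrow> nat \<Rightarrow> 'v set \<Rightarrow> bool" where
  "dominion V V0 E pr \<alpha> D \<longleftrightarrow>
     (\<exists>\<sigma>. strategy V V0 E \<alpha> \<sigma> \<and>
        (\<forall>\<pi>. play V E \<pi> \<and> \<pi> 0 \<in> D \<and> consistent \<sigma> \<pi> \<longrightarrow> (\<forall>i. \<pi> i \<in> D) \<and> wins_play pr \<alpha> \<pi>))"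

definition tangle_graph :: "'v set \<Rightarrow> 'v set \<Rightarrow> ('v \<times> 'v) set \<Rightarrow> nat \<Rightarrow> 'v set \<Rightarrow> ('v \<rightharpoonup> 'v) \<Rightarrow> ('v \<times> 'v) set" where
  "tangle_graph V V0 E \<alpha> U \<sigma> =
     {(u, w). (u, w) \<in> E \<and> u \<in> U \<and> \<sigma> u = Some w} \<union>
     {(u, w). (u, w) \<in> E \<and> u \<in> U \<inter> player_vs V V0 (1 - \<alpha>) \<and> w \<in> U}"

definition cycles_won :: "('v \<Rightarrow> nat) \<Rightarrow> nat \<Rightarrow> ('v \<times> 'v) set \<Rightarrow> bool" where
  "cycles_won pr \<alpha> H \<longleftrightarrow>
     (\<forall>c. c \<noteq> [] \<and> (\<forall>i<length c. (c ! i, c ! (Suc i mod length c)) \<in> H) \<longrightarrow>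
          Max (pr ` set c) mod 2 = \<alpha>)"

definition tangle_witness :: "'v set \<Rightarrow> 'v set \<Rightarrow> ('v \<times> 'v) set \<Rightarrow> ('v \<Rightarrow> nat) \<Rightarrow> 'v set \<Rightarrow> ('v \<rightharpoonup> 'v) \<Rightarrow> bool" where
  "tangle_witness V V0 E pr U \<sigma> \<longleftrightarrow>
     U \<noteq> {} \<and> U \<subseteq> V \<and>
     (let \<alpha> = Max (pr ` U) mod 2 in
        strategy V V0 E \<alpha> \<sigma> \<and> dom \<sigma> = U \<inter> player_vs V V0 \<alpha> \<and> ran \<sigma> \<subseteq> U \<and>
        (\<forall>u\<in>U. \<forall>w\<in>U. (u, w) \<in> (tangle_graph V V0 E \<alpha> U \<sigma>)\<^sup>*) \<and>
        cycles_won pr \<alpha> (tangle_graph V V0 E \<alpha> U \<sigma>))"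

definition is_tangle :: "'v set \<Rightarrow> 'v set \<Rightarrow> ('v \<times> 'v) set \<Rightarrow> ('v \<Rightarrow> nat) \<Rightarrow> 'v set \<Rightarrow> bool" where
  "is_tangle V V0 E pr U \<longleftrightarrow> (\<exists>\<sigma>. tangle_witness V V0 E pr U \<sigma>)"

definition tangle_escapes :: "'v set \<Rightarrow> 'v set \<Rightarrow> ('v \<times> 'v) set \<Rightarrow> ('v \<Rightarrow> nat) \<Rightarrow> 'v set \<Rightarrow> 'v set" where
  "tangle_escapes V V0 E pr t =
     {v. v \<notin> t \<and> (\<exists>u \<in> t \<inter> player_vs V V0 (1 - Max (pr ` t) mod 2). (u, v) \<in> E)}"

text \<open>Tangles are represented together with their witness strategies as pairs.\<close>

definition attr_pending :: "'v set \<Rightarrow> 'v set \<Rightarrow> ('v \<times> 'v) set \<Rightarrow> nat \<Rightarrow> 'v set \<Rightarrow> 'v set \<Rightarrow> ('v \<rightharpoonup> 'v) \<Rightarrow> bool" where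
  "attr_pending V V0 E \<alpha> A Z \<sigma> \<longleftrightarrow>
     (\<exists>a \<in> A \<inter> player_vs V V0 \<alpha>. a \<notin> dom \<sigma> \<and> (\<exists>w\<in>Z. (a, w) \<in> E))"

inductive attr_step :: "'v set \<Rightarrow> 'v set \<Rightarrow> ('v \<times> 'v) set \<Rightarrow> ('v \<Rightarrow> nat) \<Rightarrow>
    ('v set \<times> ('v \<rightharpoonup> 'v)) set \<Rightarrow> nat \<Rightarrow> 'v set \<Rightarrow>
    'v set \<times> ('v \<rightharpoonup> 'v) \<Rightarrow> 'v set \<times> ('v \<rightharpoonup> 'v) \<Rightarrow> bool"
  for V V0 E pr T \<alpha> A where
  target_strat:
    "\<lbrakk> a \<in> A \<inter> player_vs V V0 \<alpha>; a \<notin> dom \<sigma>; (a, w) \<in> E; w \<in> Z \<rbrakk>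
     \<Longrightarrow> attr_step V V0 E pr T \<alpha> A (Z, \<sigma>) (Z, \<sigma>(a \<mapsto> w))"
| add_own:
    "\<lbrakk> \<not> attr_pending V V0 E \<alpha> A Z \<sigma>; v \<in> player_vs V V0 \<alpha>; v \<notin> Z; (v, w) \<in> E; w \<in> Z \<rbrakk>
     \<Longrightarrow> attr_step V V0 E pr T \<alpha> A (Z, \<sigma>) (insert v Z, \<sigma>(v \<mapsto> w))"
| add_opp:
    "\<lbrakk> \<not> attr_pending V V0 E \<alpha> A Z \<sigma>; v \<in> player_vs V V0 (1 - \<alpha>); v \<notin> Z;
       \<forall>w. (v, w) \<in> E \<longrightarrow> w \<in> Z \<rbrakk>
     \<Longrightarrow> attr_step V V0 E pr T \<alpha> A (Z, \<sigma>) (insert v Z, \<sigma>)"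
| add_tangle:
    "\<lbrakk> \<not> attr_pending V V0 E \<alpha> A Z \<sigma>; (t, \<tau>) \<in> T; Max (pr ` t) mod 2 = \<alpha>; \<not> t \<subseteq> Z;
       tangle_escapes V V0 E pr t \<noteq> {}; tangle_escapes V V0 E pr t \<subseteq> Z \<rbrakk>
     \<Longrightarrow> attr_step V V0 E pr T \<alpha> A (Z, \<sigma>)
           (Z \<union> t, \<lambda>u. if u \<in> t \<inter> player_vs V V0 \<alpha> \<and> u \<notin> dom \<sigma> then \<tau> u else \<sigma> u)"

definition extract_Y :: "'v set \<Rightarrow> 'v set \<Rightarrow> ('v \<times> 'v) set \<Rightarrow> nat \<Rightarrow> 'v set \<Rightarrow> ('v \<rightharpoonup> 'v) \<Rightarrow> 'v set" where
  "extract_Y V V0 E \<alpha> Z \<sigma> =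
     gfp (\<lambda>X. {v \<in> Z. (v \<in> player_vs V V0 (1 - \<alpha>) \<longrightarrow> (\<forall>w. (v, w) \<in> E \<longrightarrow> w \<in> X)) \<and>
                      (v \<in> player_vs V V0 \<alpha> \<longrightarrow> (\<exists>w\<in>X. \<sigma> v = Some w))})"

definition extract_graph :: "'v set \<Rightarrow> 'v set \<Rightarrow> ('v \<times> 'v) set \<Rightarrow> nat \<Rightarrow> 'v set \<Rightarrow> ('v \<rightharpoonup> 'v) \<Rightarrow> ('v \<times> 'v) set" where
  "extract_graph V V0 E \<alpha> Z \<sigma> =
     {(v, w). v \<in> extract_Y V V0 E \<alpha> Z \<sigma> \<inter> player_vs V V0 \<alpha> \<and> \<sigma> v = Some w} \<union>
     {(v, w). (v, w) \<in> E \<and> v \<in> extract_Y V V0 E \<alpha> Z \<sigma> \<inter> player_vs V V0 (1 - \<alpha>)}"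

definition extract_tangles :: "'v set \<Rightarrow> 'v set \<Rightarrow> ('v \<times> 'v) set \<Rightarrow> nat \<Rightarrow> 'v set \<Rightarrow> ('v \<rightharpoonup> 'v) \<Rightarrow> ('v set \<times> ('v \<rightharpoonup> 'v)) set" where
  "extract_tangles V V0 E \<alpha> Z \<sigma> =
     (let H = extract_graph V V0 E \<alpha> Z \<sigma> in
      {(C, \<sigma> |` C) | C. \<exists>u \<in> extract_Y V V0 E \<alpha> Z \<sigma>.
           C = {w. (u, w) \<in> H\<^sup>* \<and> (w, u) \<in> H\<^sup>*} \<and>
           (\<forall>v w. (v, w) \<in> H \<longrightarrow> v \<in> C \<longrightarrow> w \<in> C) \<and>
           (\<exists>v\<in>C. \<exists>w\<in>C. (v, w) \<in> H)})"

datatype 'v search_state =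
    Loop "('v set \<times> ('v \<rightharpoonup> 'v)) set" "'v \<rightharpoonup> nat" "('v set \<times> ('v \<rightharpoonup> 'v)) set"
      \<comment> \<open>T, region function r, Y: at the test of the inner while loop\<close>
  | Attr "('v set \<times> ('v \<rightharpoonup> 'v)) set" "'v \<rightharpoonup> nat" "('v set \<times> ('v \<rightharpoonup> 'v)) set" "'v set" "'v \<rightharpoonup> 'v"
  | Return "('v set \<times> ('v \<rightharpoonup> 'v)) set" "'v set \<times> ('v \<rightharpoonup> 'v)"

definition sub_V :: "'v set \<Rightarrow> ('v \<rightharpoonup> nat) \<Rightarrow> 'v set" where
  "sub_V V r = V - dom r"

definition sub_E :: "'v set \<Rightarrow> ('v \<times> 'v) set \<Rightarrow> ('v \<rightharpoonup> nat) \<Rightarrow> ('v \<times> 'v) set" where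
  "sub_E V E r = E \<inter> (sub_V V r \<times> sub_V V r)"

definition sub_T :: "'v set \<Rightarrow> ('v set \<times> ('v \<rightharpoonup> 'v)) set \<Rightarrow> ('v \<rightharpoonup> nat) \<Rightarrow> ('v set \<times> ('v \<rightharpoonup> 'v)) set" where
  "sub_T V T r = {t \<in> T. fst t \<subseteq> sub_V V r}"

definition sub_top :: "'v set \<Rightarrow> ('v \<Rightarrow> nat) \<Rightarrow> ('v \<rightharpoonup> nat) \<Rightarrow> nat" where
  "sub_top V pr r = Max (pr ` sub_V V r)"

definition sub_target :: "'v set \<Rightarrow> ('v \<Rightarrow> nat) \<Rightarrow> ('v \<rightharpoonup> nat) \<Rightarrow> 'v set" where
  "sub_target V pr r = {v \<in> sub_V V r. pr v = sub_top V pr r}"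

inductive search_step :: "'v set \<Rightarrow> 'v set \<Rightarrow> ('v \<times> 'v) set \<Rightarrow> ('v \<Rightarrow> nat) \<Rightarrow>
    'v search_state \<Rightarrow> 'v search_state \<Rightarrow> bool"
  for V V0 E pr where
  loop_enter:
    "sub_V V r \<noteq> {} \<Longrightarrow>
     search_step V V0 E pr (Loop T r Y) (Attr T r Y (sub_target V pr r) Map.empty)"
| loop_done:
    "sub_V V r = {} \<Longrightarrow>
     search_step V V0 E pr (Loop T r Y) (Loop (T \<union> Y) Map.empty {})"
| attr:
    "attr_step (sub_V V r) V0 (sub_E V E r) pr (sub_T V T r) (sub_top V pr r mod 2)
        (sub_target V pr r) (Z, \<sigma>) (Z', \<sigma>') \<Longrightarrow>
     search_step V V0 E pr (Attr T r Y Z \<sigma>) (Attr T r Y Z' \<sigma>')"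
| attr_return:
    "\<lbrakk> \<forall>s'. \<not> attr_step (sub_V V r) V0 (sub_E V E r) pr (sub_T V T r) (sub_top V pr r mod 2)
                 (sub_target V pr r) (Z, \<sigma>) s';
       t \<in> extract_tangles (sub_V V r) V0 (sub_E V E r) (sub_top V pr r mod 2) Z \<sigma>;
       tangle_escapes V V0 E pr (fst t) = {} \<rbrakk> \<Longrightarrow>
     search_step V V0 E pr (Attr T r Y Z \<sigma>) (Return (T \<union> Y) t)"
| attr_next:
    "\<lbrakk> \<forall>s'. \<not> attr_step (sub_V V r) V0 (sub_E V E r) pr (sub_T V T r) (sub_top V pr r mod 2)
                 (sub_target V pr r) (Z, \<sigma>) s';
       \<forall>t \<in> extract_tangles (sub_V V r) V0 (sub_E V E r) (sub_top V pr r mod 2) Z \<sigma>.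
          tangle_escapes V V0 E pr (fst t) \<noteq> {} \<rbrakk> \<Longrightarrow>
     search_step V V0 E pr (Attr T r Y Z \<sigma>)
       (Loop T (\<lambda>v. if v \<in> Z then Some (sub_top V pr r) else r v)
             (Y \<union> extract_tangles (sub_V V r) V0 (sub_E V E r) (sub_top V pr r mod 2) Z \<sigma>))"

end

theory Submission
  imports Defs
begin


lemma player_vs_sub: "W \<subseteq> V \<Longrightarrow> player_vs W V0 a = W \<inter> player_vs V V0 a"
  by (auto simp: player_vs_def)

lemma player_vs_cases: "(a::nat) < 2 \<Longrightarrow> v \<in> V \<Longrightarrow> v \<in> player_vs V V0 a \<or> v \<in> player_vs V V0 (1 - a)"
  by (auto simp: player_vs_def)

lemma player_vs_disj: "(a::nat) < 2 \<Longrightarrow> v \<in> player_vs V V0 a \<Longrightarrow> v \<notin> player_vs V V0 (1 - a)"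
  by (auto simp: player_vs_def)

lemma player_vs_subset: "player_vs V V0 a \<subseteq> V"
  by (auto simp: player_vs_def)

lemma rank_cycle:
  fixes rk :: "'v \<Rightarrow> nat"
  assumes c: "c \<noteq> []" "\<forall>i<length c. (c!i, c!(Suc i mod length c)) \<in> G"
    and rkG: "\<forall>v w. (v,w) \<in> G \<longrightarrow> v \<notin> A \<longrightarrow> rk w < rk v \<or> (rk w = rk v \<and> (v,w) \<in> TG (rk v))"
    and TGw: "\<forall>k. cycles_won pr \<alpha> (TG k)"
    and Atop: "\<forall>a\<in>A. pr a mod 2 = \<alpha> \<and> (\<forall>w\<in>set c. pr w \<le> pr a)"
  shows "Max (pr ` set c) mod 2 = \<alpha>"
proof (cases "\<exists>a\<in>set c. a \<in> A")
  case True
  then obtain a where a: "a \<in> set c" "a \<in> A" by blast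
  have "Max (pr ` set c) = pr a"
    using a Atop by (intro antisym Max.boundedI Max_ge) auto
  thus ?thesis using a Atop by simp
next
  case False
  define n where "n = length c"
  have n: "n > 0" using c by (simp add: n_def)
  have step: "rk (c!(Suc i mod n)) \<le> rk (c!i)" if "i < n" for i
  proof -
    have "c!i \<notin> A" using False that by (auto simp: n_def)
    thus ?thesis using rkG c(2) that by (fastforce simp: n_def)
  qed
  have gen: "rk (c!((i+k) mod n)) \<le> rk (c!i)" if "i < n" for i k
  proof (induction k)
    case 0 thus ?case using that by simp
  next
    case (Suc k)
    have "(i + Suc k) mod n = Suc ((i+k) mod n) mod n" by (simp add: mod_Suc_eq)
    moreover have "(i+k) mod n < n" using n by simp
    ultimately show ?case using step[of "(i+k) mod n"] Suc by simp
  qed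
  have le: "rk (c!j) \<le> rk (c!i)" if "i < n" "j < n" for i j
  proof -
    have "(i + (j + n - i)) mod n = j" using that by simp
    thus ?thesis using gen[OF that(1), of "j + n - i"] by simp
  qed
  have edge: "(c!i, c!(Suc i mod n)) \<in> TG (rk (c!0))" if "i < n" for i
  proof -
    have "c!i \<notin> A" using False that by (auto simp: n_def)
    moreover have "Suc i mod n < n" using n by simp
    ultimately have "rk (c!(Suc i mod n)) = rk (c!i) \<and> rk (c!i) = rk (c!0)"
      using le[of i "Suc i mod n"] le[of "Suc i mod n" i] le[of 0 i] le[of i 0] that n by simp
    moreover have "(c!i, c!(Suc i mod n)) \<in> G" using c(2) that by (simp add: n_def)
    ultimately show ?thesis using rkG \<open>c!i \<notin> A\<close> by fastforce
  qed
  show ?thesis using TGw[rule_format, of "rk (c!0)"] edge c(1)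
    unfolding cycles_won_def n_def by blast
qed

lemma trancl_list:
  assumes "(x,y) \<in> R\<^sup>+"
  shows "\<exists>c. c \<noteq> [] \<and> c!0 = x \<and> (\<forall>i. Suc i < length c \<longrightarrow> (c!i, c!Suc i) \<in> R) \<and> (last c, y) \<in> R
          \<and> set c \<subseteq> {z. (x,z) \<in> R\<^sup>*}"
  using assms
proof (induction rule: trancl_induct)
  case (base y)
  thus ?case by (intro exI[of _ "[x]"]) auto
next
  case (step y z)
  then obtain c where c: "c \<noteq> []" "c!0 = x" "\<forall>i. Suc i < length c \<longrightarrow> (c!i, c!Suc i) \<in> R"
     "(last c, y) \<in> R" "set c \<subseteq> {z. (x,z) \<in> R\<^sup>*}" by blast
  show ?case
  proof (intro exI[of _ "c @ [y]"] conjI allI impI)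
    fix i assume i: "Suc i < length (c @ [y])"
    show "((c @ [y]) ! i, (c @ [y]) ! Suc i) \<in> R"
    proof (cases "Suc i < length c")
      case True thus ?thesis using c(3) by (simp add: nth_append)
    next
      case False
      hence "i = length c - 1" using i by simp
      thus ?thesis using c(1,4) by (simp add: nth_append last_conv_nth)
    qed
  qed (use c step in \<open>auto simp: nth_append\<close>)
qed

lemma trancl_cycle:
  assumes "(x,x) \<in> R\<^sup>+"
  shows "\<exists>c. c \<noteq> [] \<and> x \<in> set c \<and> (\<forall>i<length c. (c!i, c!(Suc i mod length c)) \<in> R)
          \<and> set c \<subseteq> {z. (x,z) \<in> R\<^sup>*}"
proof -
  obtain c where c: "c \<noteq> []" "c!0 = x" "\<forall>i. Suc i < length c \<longrightarrow> (c!i, c!Suc i) \<in> R"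
     "(last c, x) \<in> R" "set c \<subseteq> {z. (x,z) \<in> R\<^sup>*}" using trancl_list[OF assms] by blast
  show ?thesis
  proof (intro exI[of _ c] conjI allI impI)
    show "x \<in> set c" using c(1,2) nth_mem by fastforce
    fix i assume i: "i < length c"
    show "(c!i, c!(Suc i mod length c)) \<in> R"
    proof (cases "Suc i < length c")
      case True thus ?thesis using c(3) by simp
    next
      case False
      hence "i = length c - 1" "Suc i = length c" using i by simp_all
      thus ?thesis using c(1,2,4) by (simp add: last_conv_nth)
    qed
  qed (use c in auto)
qed

lemma bottom_scc:
  assumes fin: "finite Y" and ne: "Y \<noteq> {}" and succ: "\<forall>v\<in>Y. \<exists>w. (v,w) \<in> H"
    and cl: "\<forall>v w. (v,w) \<in> H \<longrightarrow> v \<in> Y \<longrightarrow> w \<in> Y"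
  shows "\<exists>u\<in>Y. (\<forall>v w. (v,w) \<in> H \<longrightarrow> v \<in> {w. (u,w) \<in> H\<^sup>* \<and> (w,u) \<in> H\<^sup>*} \<longrightarrow> w \<in> {w. (u,w) \<in> H\<^sup>* \<and> (w,u) \<in> H\<^sup>*})
     \<and> (\<exists>v\<in>{w. (u,w) \<in> H\<^sup>* \<and> (w,u) \<in> H\<^sup>*}. \<exists>w\<in>{w. (u,w) \<in> H\<^sup>* \<and> (w,u) \<in> H\<^sup>*}. (v,w) \<in> H)"
proof -
  define R where "R u = {w. (u,w) \<in> H\<^sup>*}" for u
  have RY: "R u \<subseteq> Y" if "u \<in> Y" for u
  proof
    fix w assume "w \<in> R u"
    hence "(u,w) \<in> H\<^sup>*" by (simp add: R_def)
    thus "w \<in> Y"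
    proof (induction rule: rtrancl_induct)
      case base thus ?case using that .
    next
      case (step y z) thus ?case using cl by blast
    qed
  qed
  have finR: "finite (R u)" if "u \<in> Y" for u using RY[OF that] fin finite_subset by blast
  define m where "m = Min ((\<lambda>u. card (R u)) ` Y)"
  have "m \<in> (\<lambda>u. card (R u)) ` Y" unfolding m_def using fin ne by (intro Min_in) auto
  then obtain u where u: "u \<in> Y" "card (R u) = m" by auto
  have mmin: "m \<le> card (R x)" if "x \<in> Y" for x using fin that by (simp add: m_def)
  have bk: "(w,u) \<in> H\<^sup>*" if "(u,w) \<in> H\<^sup>*" for w
  proof -
    have wY: "w \<in> Y" using RY[OF u(1)] that unfolding R_def by blast
    have sub: "R w \<subseteq> R u" using that unfolding R_def by (blast intro: rtrancl_trans)
    have "card (R u) \<le> card (R w)" using mmin[OF wY] u(2) by simp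
    hence "card (R w) = card (R u)" using card_mono[OF finR[OF u(1)] sub] by linarith
    hence "R w = R u" by (rule card_subset_eq[OF finR[OF u(1)] sub])
    moreover have "u \<in> R u" by (simp add: R_def)
    ultimately show ?thesis unfolding R_def by blast
  qed
  obtain w where w: "(u,w) \<in> H" using succ u(1) by blast
  have A: "\<forall>v w. (v,w) \<in> H \<longrightarrow> v \<in> {w. (u,w) \<in> H\<^sup>* \<and> (w,u) \<in> H\<^sup>*} \<longrightarrow> w \<in> {w. (u,w) \<in> H\<^sup>* \<and> (w,u) \<in> H\<^sup>*}"
  proof (intro allI impI)
    fix v w assume "(v,w) \<in> H" "v \<in> {w. (u,w) \<in> H\<^sup>* \<and> (w,u) \<in> H\<^sup>*}"
    hence "(u,v) \<in> H\<^sup>*" "(v,w) \<in> H" by simp_all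
    hence "(u,w) \<in> H\<^sup>*" by (rule rtrancl_into_rtrancl)
    thus "w \<in> {w. (u,w) \<in> H\<^sup>* \<and> (w,u) \<in> H\<^sup>*}" using bk by blast
  qed
  have B: "u \<in> {w. (u,w) \<in> H\<^sup>* \<and> (w,u) \<in> H\<^sup>*}" by simp
  have C: "w \<in> {w. (u,w) \<in> H\<^sup>* \<and> (w,u) \<in> H\<^sup>*}" using w bk by blast
  show ?thesis
    by (rule bexI[OF _ u(1)], rule conjI[OF A], rule bexI[OF _ B], rule bexI[OF _ C], rule w)
qed


lemma tangle_dominion:
  assumes pg: "parity_game V V0 E pr" and tw: "tangle_witness V V0 E pr C \<tau>"
    and esc: "tangle_escapes V V0 E pr C = {}"
  shows "dominion V V0 E pr (Max (pr ` C) mod 2) C"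
proof -
  define \<alpha> where "\<alpha> = Max (pr ` C) mod 2"
  define G where "G = tangle_graph V V0 E \<alpha> C \<tau>"
  have \<alpha>2: "\<alpha> < 2" by (simp add: \<alpha>_def)
  have CV: "C \<subseteq> V" and strat: "strategy V V0 E \<alpha> \<tau>" and domt: "dom \<tau> = C \<inter> player_vs V V0 \<alpha>"
    and rant: "ran \<tau> \<subseteq> C" and cw: "cycles_won pr \<alpha> G"
    using tw unfolding tangle_witness_def Let_def \<alpha>_def[symmetric] G_def by auto
  have finV: "finite V" using pg by (simp add: parity_game_def)
  have finC: "finite C" using CV finV finite_subset by blast
  show ?thesis unfolding dominion_def \<alpha>_def[symmetric]
  proof (intro exI[of _ \<tau>] conjI allI impI strat)
    fix \<pi> assume pc: "play V E \<pi> \<and> \<pi> 0 \<in> C \<and> consistent \<tau> \<pi>"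
    have stepC: "\<pi> (Suc i) \<in> C \<and> (\<pi> i, \<pi> (Suc i)) \<in> G" if "\<pi> i \<in> C" for i
    proof -
      have e: "(\<pi> i, \<pi> (Suc i)) \<in> E" "\<pi> i \<in> V" using pc unfolding play_def by auto
      show ?thesis
      proof (cases "\<pi> i \<in> player_vs V V0 \<alpha>")
        case True
        hence "\<pi> i \<in> dom \<tau>" using domt that by auto
        hence "\<tau> (\<pi> i) = Some (\<pi> (Suc i))" using pc unfolding consistent_def by auto
        hence "\<pi> (Suc i) \<in> ran \<tau>" by (auto simp: ran_def)
        thus ?thesis using rant e that \<open>\<tau> (\<pi> i) = Some (\<pi> (Suc i))\<close> unfolding G_def tangle_graph_def by auto
      next
        case False
        hence opp: "\<pi> i \<in> player_vs V V0 (1 - \<alpha>)" using e(2) \<alpha>2 by (auto simp: player_vs_def)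
        have "\<pi> (Suc i) \<in> C"
        proof (rule ccontr)
          assume "\<pi> (Suc i) \<notin> C"
          hence "\<pi> (Suc i) \<in> tangle_escapes V V0 E pr C"
            using opp that e unfolding tangle_escapes_def \<alpha>_def by auto
          thus False using esc by simp
        qed
        thus ?thesis using opp that e unfolding G_def tangle_graph_def by auto
      qed
    qed
    have allC: "\<pi> i \<in> C" for i
      by (induction i) (use pc stepC in auto)
    have edges: "(\<pi> i, \<pi> (Suc i)) \<in> G" for i using stepC allC by blast
    define S where "S = {p. \<exists>\<^sub>\<infinity> i. pr (\<pi> i) = p}"
    have SC: "S \<subseteq> pr ` C"
    proof
      fix p assume "p \<in> S"
      then obtain i where "pr (\<pi> i) = p" unfolding S_def using INFM_EX by blast
      thus "p \<in> pr ` C" using allC by blast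
    qed
    have finS: "finite S" using SC finC finite_subset by blast
    have frange: "finite (range (\<lambda>i. pr (\<pi> i)))"
      by (rule finite_subset[of _ "pr ` C"]) (use allC finC in auto)
    obtain y where "infinite ((\<lambda>i. pr (\<pi> i)) -` {y})"
      using inf_img_fin_dom[OF frange infinite_UNIV_nat] by auto
    hence "y \<in> S" unfolding S_def INFM_iff_infinite by (simp add: vimage_def)
    hence Sne: "S \<noteq> {}" by auto
    define q where "q = Max S"
    have qS: "q \<in> S" using finS Sne by (simp add: q_def)
    have finB: "finite {i. q < pr (\<pi> i)}"
    proof -
      have "{i. q < pr (\<pi> i)} \<subseteq> (\<Union>p \<in> pr ` C - S. {i. pr (\<pi> i) = p})"
      proof
        fix i assume "i \<in> {i. q < pr (\<pi> i)}"
        hence "pr (\<pi> i) \<notin> S" using finS q_def Max_ge by fastforce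
        thus "i \<in> (\<Union>p \<in> pr ` C - S. {i. pr (\<pi> i) = p})" using allC by auto
      qed
      moreover have "finite (\<Union>p \<in> pr ` C - S. {i. pr (\<pi> i) = p})"
      proof (rule finite_UN_I)
        show "finite (pr ` C - S)" using finC by simp
        fix p assume "p \<in> pr ` C - S"
        thus "finite {i. pr (\<pi> i) = p}" unfolding S_def INFM_iff_infinite by simp
      qed
      ultimately show ?thesis using finite_subset by blast
    qed
    obtain N where N: "\<forall>i\<ge>N. pr (\<pi> i) \<le> q"
    proof -
      obtain k where "{i. q < pr (\<pi> i)} \<subseteq> {..<k}" using finite_nat_bounded[OF finB] by blast
      hence "\<forall>i\<ge>k. pr (\<pi> i) \<le> q" by (auto simp: subset_eq not_less)
      thus ?thesis by (rule that)
    qed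
    have infq: "infinite {i. pr (\<pi> i) = q}" using qS unfolding S_def INFM_iff_infinite by simp
    have fimg: "finite (\<pi> ` {i. pr (\<pi> i) = q})" by (rule finite_subset[of _ C]) (use allC finC in auto)
    obtain v where v: "v \<in> \<pi> ` {i. pr (\<pi> i) = q}" "infinite (\<pi> -` {v} \<inter> {i. pr (\<pi> i) = q})"
      by (rule inf_img_fin_domE'[OF fimg infq])
    have pv: "pr v = q" using v(1) by auto
    have infv: "infinite {i. \<pi> i = v}"
      using v(2) by (rule infinite_super[rotated]) auto
    obtain i where i: "i \<ge> N" "\<pi> i = v" using infv unfolding infinite_nat_iff_unbounded_le by blast
    obtain j where j: "j \<ge> Suc i" "\<pi> j = v" using infv unfolding infinite_nat_iff_unbounded_le by blast
    define c where "c = map \<pi> [i..<j]"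
    define n where "n = j - i"
    have ln: "length c = n" "n > 0" using j by (auto simp: c_def n_def)
    have cnth: "c ! k = \<pi> (i + k)" if "k < n" for k using that by (simp add: c_def n_def)
    have cyc: "\<forall>k<length c. (c!k, c!(Suc k mod length c)) \<in> G"
    proof (intro allI impI)
      fix k assume k: "k < length c"
      have "c!(Suc k mod length c) = \<pi> (Suc (i + k))"
      proof (cases "Suc k < n")
        case True thus ?thesis using cnth ln by simp
      next
        case False
        hence "Suc k = n" using k ln by simp
        hence "Suc (i + k) = j" using j by (simp add: n_def)
        thus ?thesis using cnth[of 0] ln \<open>Suc k = n\<close> i j by simp
      qed
      thus "(c!k, c!(Suc k mod length c)) \<in> G" using cnth[of k] k ln edges[of "i + k"] by simp
    qed
    have cne: "c \<noteq> []" using ln by auto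
    have mc: "Max (pr ` set c) mod 2 = \<alpha>" using cw cyc cne unfolding cycles_won_def by blast
    have "Max (pr ` set c) = q"
    proof (rule antisym)
      show "Max (pr ` set c) \<le> q" using N i(1) cne by (intro Max.boundedI) (auto simp: c_def)
      have "i \<in> {i..<j}" using j by simp
      hence "v \<in> set c" using i(2) unfolding c_def by (metis imageI set_map set_upt)
      thus "q \<le> Max (pr ` set c)" using pv by (auto intro: Max_ge)
    qed
    thus "wins_play pr \<alpha> \<pi>"
      using mc unfolding wins_play_def S_def[symmetric] q_def by simp
    show "\<pi> i \<in> C" for i by (rule allC)
  qed
qed


definition attr_inv :: "'v set \<Rightarrow> 'v set \<Rightarrow> ('v \<times> 'v) set \<Rightarrow> ('v \<Rightarrow> nat) \<Rightarrow> nat \<Rightarrow> 'v set \<Rightarrow> 'v set \<Rightarrow> ('v \<rightharpoonup> 'v) \<Rightarrow> bool" where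
  "attr_inv W V0 F pr a A Z \<sigma> \<longleftrightarrow> A \<subseteq> Z \<and> Z \<subseteq> W \<and> dom \<sigma> \<subseteq> Z \<inter> player_vs W V0 a \<and>
    (\<forall>v w. \<sigma> v = Some w \<longrightarrow> (v,w) \<in> F \<and> w \<in> Z) \<and>
    (\<forall>v \<in> Z \<inter> player_vs W V0 a - A. v \<in> dom \<sigma>) \<and>
    (\<forall>u \<in> Z \<inter> player_vs W V0 (1-a) - A. \<forall>w. (u,w) \<in> F \<longrightarrow> w \<in> Z) \<and>
    (\<exists>rk::'v\<Rightarrow>nat. \<exists>TG. (\<forall>k. cycles_won pr a (TG k)) \<and>
      (\<forall>v w. v \<in> Z - A \<longrightarrow> ((v \<in> player_vs W V0 a \<and> \<sigma> v = Some w) \<or> (v \<in> player_vs W V0 (1-a) \<and> (v,w) \<in> F)) \<longrightarrow>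
         rk w < rk v \<or> (rk w = rk v \<and> (v,w) \<in> TG (rk v))))"

lemma attr_inv_init: "A \<subseteq> W \<Longrightarrow> attr_inv W V0 F pr a A A Map.empty"
  unfolding attr_inv_def cycles_won_def
  by (auto intro!: exI[of _ "\<lambda>_. {}"])

lemma attr_inv_step:
  fixes W V0 :: "'v set"
  assumes inv: "attr_inv W V0 F pr a A Z \<sigma>"
    and st: "attr_step W V0 F pr TT a A (Z,\<sigma>) (Z',\<sigma>')"
    and finW: "finite W"
    and TT: "\<forall>p\<in>TT. fst p \<subseteq> W \<and> tangle_witness V V0 E pr (fst p) (snd p)"
    and WV: "W \<subseteq> V" and FE: "F = E \<inter> (W \<times> W)"
    and a2: "a < 2"
  shows "attr_inv W V0 F pr a A Z' \<sigma>'"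
proof -
  have AZ: "A \<subseteq> Z" and ZW: "Z \<subseteq> W" and domZ: "dom \<sigma> \<subseteq> Z \<inter> player_vs W V0 a"
    and I2: "\<forall>v w. \<sigma> v = Some w \<longrightarrow> (v,w) \<in> F \<and> w \<in> Z"
    and I3: "\<forall>v \<in> Z \<inter> player_vs W V0 a - A. v \<in> dom \<sigma>"
    and I4: "\<forall>u \<in> Z \<inter> player_vs W V0 (1-a) - A. \<forall>w. (u,w) \<in> F \<longrightarrow> w \<in> Z"
    using inv unfolding attr_inv_def by blast+
  obtain rk :: "'v \<Rightarrow> nat" and TG where TGw: "\<forall>k. cycles_won pr a (TG k)"
    and RK: "\<forall>v w. v \<in> Z - A \<longrightarrow> ((v \<in> player_vs W V0 a \<and> \<sigma> v = Some w) \<or> (v \<in> player_vs W V0 (1-a) \<and> (v,w) \<in> F)) \<longrightarrow>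
         rk w < rk v \<or> (rk w = rk v \<and> (v,w) \<in> TG (rk v))"
    using inv unfolding attr_inv_def by blast
  have finZ: "finite Z" using ZW finW finite_subset by blast
  define n where "n = Suc (Max (rk ` Z))"
  have rkn: "rk x < n" if "x \<in> Z" for x using that finZ by (simp add: n_def le_imp_less_Suc)
  have disj: "v \<notin> player_vs W V0 (1-a)" if "v \<in> player_vs W V0 a" for v
    using player_vs_disj[OF a2 that] .
  have disj2: "v \<notin> player_vs W V0 a" if "v \<in> player_vs W V0 (1-a)" for v
    using a2 that by (auto simp: player_vs_def)
  from st show ?thesis
  proof cases
    case (target_strat a0 w0)
    show ?thesis unfolding attr_inv_def
    proof (intro conjI)
      show "\<exists>rk::'v\<Rightarrow>nat. \<exists>TG. (\<forall>k. cycles_won pr a (TG k)) \<and>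
      (\<forall>v w. v \<in> Z' - A \<longrightarrow> ((v \<in> player_vs W V0 a \<and> \<sigma>' v = Some w) \<or> (v \<in> player_vs W V0 (1-a) \<and> (v,w) \<in> F)) \<longrightarrow>
         rk w < rk v \<or> (rk w = rk v \<and> (v,w) \<in> TG (rk v)))"
      proof (intro exI[of _ rk] exI[of _ TG] conjI TGw allI impI)
        fix v w assume v: "v \<in> Z' - A"
          and e: "(v \<in> player_vs W V0 a \<and> \<sigma>' v = Some w) \<or> (v \<in> player_vs W V0 (1-a) \<and> (v,w) \<in> F)"
        have "v \<noteq> a0" using v target_strat by auto
        hence "v \<in> Z - A" "(v \<in> player_vs W V0 a \<and> \<sigma> v = Some w) \<or> (v \<in> player_vs W V0 (1-a) \<and> (v,w) \<in> F)"
          using v e target_strat by auto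
        thus "rk w < rk v \<or> (rk w = rk v \<and> (v,w) \<in> TG (rk v))" using RK by blast
      qed
    next
      have Z': "Z' = Z" and s': "\<sigma>' = \<sigma>(a0 \<mapsto> w0)" using target_strat by auto
      show "A \<subseteq> Z'" "Z' \<subseteq> W" using AZ ZW Z' by auto
      show "dom \<sigma>' \<subseteq> Z' \<inter> player_vs W V0 a" using domZ AZ target_strat Z' s' by auto
      show "\<forall>v w. \<sigma>' v = Some w \<longrightarrow> (v,w) \<in> F \<and> w \<in> Z'" using I2 target_strat Z' s' by auto
      show "\<forall>v \<in> Z' \<inter> player_vs W V0 a - A. v \<in> dom \<sigma>'" using I3 Z' s' by auto
      show "\<forall>u \<in> Z' \<inter> player_vs W V0 (1-a) - A. \<forall>w. (u,w) \<in> F \<longrightarrow> w \<in> Z'" using I4 Z' by auto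
    qed
  next
    case (add_own v0 w0)
    have v0W: "v0 \<in> W" using add_own by (auto simp: player_vs_def split: if_splits)
    show ?thesis unfolding attr_inv_def
    proof (intro conjI)
      show "\<exists>rk::'v\<Rightarrow>nat. \<exists>TG. (\<forall>k. cycles_won pr a (TG k)) \<and>
      (\<forall>v w. v \<in> Z' - A \<longrightarrow> ((v \<in> player_vs W V0 a \<and> \<sigma>' v = Some w) \<or> (v \<in> player_vs W V0 (1-a) \<and> (v,w) \<in> F)) \<longrightarrow>
         rk w < rk v \<or> (rk w = rk v \<and> (v,w) \<in> TG (rk v)))"
      proof (intro exI[of _ "rk(v0 := n)"] exI[of _ TG] conjI TGw allI impI)
        fix v w assume v: "v \<in> Z' - A"
          and e: "(v \<in> player_vs W V0 a \<and> \<sigma>' v = Some w) \<or> (v \<in> player_vs W V0 (1-a) \<and> (v,w) \<in> F)"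
        show "(rk(v0 := n)) w < (rk(v0 := n)) v \<or> ((rk(v0 := n)) w = (rk(v0 := n)) v \<and> (v,w) \<in> TG ((rk(v0 := n)) v))"
        proof (cases "v = v0")
          case True
          hence "w = w0" using e add_own disj by auto
          thus ?thesis using True add_own rkn[of w0] by auto
        next
          case False
          hence vZ: "v \<in> Z - A" using v add_own by auto
          have e': "(v \<in> player_vs W V0 a \<and> \<sigma> v = Some w) \<or> (v \<in> player_vs W V0 (1-a) \<and> (v,w) \<in> F)"
            using e False add_own by auto
          have wZ: "w \<in> Z" using e' I2 I4 vZ by blast
          hence "w \<noteq> v0" using add_own by auto
          thus ?thesis using RK vZ e' False by auto
        qed
      qed
    next
      have Z': "Z' = insert v0 Z" and s': "\<sigma>' = \<sigma>(v0 \<mapsto> w0)" using add_own by auto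
      show "A \<subseteq> Z'" "Z' \<subseteq> W" using AZ ZW Z' v0W by auto
      show "dom \<sigma>' \<subseteq> Z' \<inter> player_vs W V0 a" using domZ add_own Z' s' by auto
      show "\<forall>v w. \<sigma>' v = Some w \<longrightarrow> (v,w) \<in> F \<and> w \<in> Z'" using I2 add_own Z' s' by auto
      show "\<forall>v \<in> Z' \<inter> player_vs W V0 a - A. v \<in> dom \<sigma>'" using I3 Z' s' by auto
      show "\<forall>u \<in> Z' \<inter> player_vs W V0 (1-a) - A. \<forall>w. (u,w) \<in> F \<longrightarrow> w \<in> Z'"
        using I4 Z' disj2 add_own by auto
    qed
  next
    case (add_opp v0)
    have v0W: "v0 \<in> W" using add_opp by (auto simp: player_vs_def split: if_splits)
    show ?thesis unfolding attr_inv_def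
    proof (intro conjI)
      show "\<exists>rk::'v\<Rightarrow>nat. \<exists>TG. (\<forall>k. cycles_won pr a (TG k)) \<and>
      (\<forall>v w. v \<in> Z' - A \<longrightarrow> ((v \<in> player_vs W V0 a \<and> \<sigma>' v = Some w) \<or> (v \<in> player_vs W V0 (1-a) \<and> (v,w) \<in> F)) \<longrightarrow>
         rk w < rk v \<or> (rk w = rk v \<and> (v,w) \<in> TG (rk v)))"
      proof (intro exI[of _ "rk(v0 := n)"] exI[of _ TG] conjI TGw allI impI)
        fix v w assume v: "v \<in> Z' - A"
          and e: "(v \<in> player_vs W V0 a \<and> \<sigma>' v = Some w) \<or> (v \<in> player_vs W V0 (1-a) \<and> (v,w) \<in> F)"
        show "(rk(v0 := n)) w < (rk(v0 := n)) v \<or> ((rk(v0 := n)) w = (rk(v0 := n)) v \<and> (v,w) \<in> TG ((rk(v0 := n)) v))"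
        proof (cases "v = v0")
          case True
          hence "(v,w) \<in> F" using e add_opp disj2 domZ by auto
          hence "w \<in> Z" using add_opp True by auto
          thus ?thesis using True add_opp rkn[of w] by auto
        next
          case False
          hence vZ: "v \<in> Z - A" using v add_opp by auto
          have e': "(v \<in> player_vs W V0 a \<and> \<sigma> v = Some w) \<or> (v \<in> player_vs W V0 (1-a) \<and> (v,w) \<in> F)"
            using e False add_opp by auto
          have wZ: "w \<in> Z" using e' I2 I4 vZ by blast
          hence "w \<noteq> v0" using add_opp by auto
          thus ?thesis using RK vZ e' False by auto
        qed
      qed
    next
      have Z': "Z' = insert v0 Z" and s': "\<sigma>' = \<sigma>" using add_opp by auto
      show "A \<subseteq> Z'" "Z' \<subseteq> W" using AZ ZW Z' v0W by auto
      show "dom \<sigma>' \<subseteq> Z' \<inter> player_vs W V0 a" using domZ Z' s' by auto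
      show "\<forall>v w. \<sigma>' v = Some w \<longrightarrow> (v,w) \<in> F \<and> w \<in> Z'" using I2 Z' s' by auto
      show "\<forall>v \<in> Z' \<inter> player_vs W V0 a - A. v \<in> dom \<sigma>'" using I3 Z' s' disj add_opp by auto
      show "\<forall>u \<in> Z' \<inter> player_vs W V0 (1-a) - A. \<forall>w. (u,w) \<in> F \<longrightarrow> w \<in> Z'"
        using I4 Z' add_opp by auto
    qed
  next
    case (add_tangle t \<tau>)
    have tT: "(t, \<tau>) \<in> TT" using add_tangle by simp
    have tW: "t \<subseteq> W" and tw: "tangle_witness V V0 E pr t \<tau>" using TT[rule_format, OF tT] by auto
    have strat: "strategy V V0 E a \<tau>" and domt: "dom \<tau> = t \<inter> player_vs V V0 a"
      and rant: "ran \<tau> \<subseteq> t" and cwt: "cycles_won pr a (tangle_graph V V0 E a t \<tau>)"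
      using tw add_tangle unfolding tangle_witness_def Let_def by auto
    have tauE: "(u,w) \<in> E \<and> w \<in> t" if "\<tau> u = Some w" for u w
      using that strat rant unfolding strategy_def ran_def by blast
    have esc: "w \<in> Z" if "u \<in> t" "u \<in> player_vs W V0 (1-a)" "(u,w) \<in> F" "w \<notin> t" for u w
    proof -
      have "w \<in> tangle_escapes W V0 F pr t"
        using that add_tangle unfolding tangle_escapes_def by auto
      thus ?thesis using add_tangle by auto
    qed
    have pvW: "player_vs W V0 b \<subseteq> player_vs V V0 b" for b using WV by (auto simp: player_vs_def)
    have sig': "\<sigma>' = (\<lambda>u. if u \<in> t \<inter> player_vs W V0 a \<and> u \<notin> dom \<sigma> then \<tau> u else \<sigma> u)"
      using add_tangle by simp
    have Z': "Z' = Z \<union> t" using add_tangle by simp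
    have newsig: "(u,w) \<in> F \<and> w \<in> Z'" if "\<sigma>' u = Some w" for u w
    proof (cases "u \<in> t \<inter> player_vs W V0 a \<and> u \<notin> dom \<sigma>")
      case True
      hence "\<tau> u = Some w" using that sig' by simp
      thus ?thesis using tauE[of u w] True tW FE Z' by auto
    next
      case False
      hence "\<sigma> u = Some w" using that sig' by (auto split: if_splits)
      thus ?thesis using I2 Z' by auto
    qed
    show ?thesis unfolding attr_inv_def
    proof (intro conjI)
      show "A \<subseteq> Z'" using AZ Z' by auto
      show "Z' \<subseteq> W" using ZW tW Z' by auto
      show "dom \<sigma>' \<subseteq> Z' \<inter> player_vs W V0 a"
      proof
        fix u assume "u \<in> dom \<sigma>'"
        then obtain w where uw: "\<sigma>' u = Some w" by auto
        show "u \<in> Z' \<inter> player_vs W V0 a"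
        proof (cases "u \<in> t \<inter> player_vs W V0 a \<and> u \<notin> dom \<sigma>")
          case True thus ?thesis using Z' by auto
        next
          case False
          hence "\<sigma> u = Some w" using sig' uw by (auto split: if_splits)
          hence "u \<in> dom \<sigma>" by auto
          thus ?thesis using domZ Z' by blast
        qed
      qed
      show "\<forall>v w. \<sigma>' v = Some w \<longrightarrow> (v,w) \<in> F \<and> w \<in> Z'" using newsig by blast
      show "\<forall>v \<in> Z' \<inter> player_vs W V0 a - A. v \<in> dom \<sigma>'"
      proof
        fix v assume v: "v \<in> Z' \<inter> player_vs W V0 a - A"
        show "v \<in> dom \<sigma>'"
        proof (cases "v \<in> dom \<sigma>")
          case True thus ?thesis using sig' by auto
        next
          case False
          hence "v \<in> t" using v I3 Z' by auto
          hence "v \<in> dom \<tau>" using domt v pvW by auto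
          thus ?thesis using sig' False v \<open>v \<in> t\<close> by auto
        qed
      qed
      show "\<forall>u \<in> Z' \<inter> player_vs W V0 (1-a) - A. \<forall>w. (u,w) \<in> F \<longrightarrow> w \<in> Z'"
        using I4 esc Z' by blast
      show "\<exists>rk::'v\<Rightarrow>nat. \<exists>TG. (\<forall>k. cycles_won pr a (TG k)) \<and>
      (\<forall>v w. v \<in> Z' - A \<longrightarrow> ((v \<in> player_vs W V0 a \<and> \<sigma>' v = Some w) \<or> (v \<in> player_vs W V0 (1-a) \<and> (v,w) \<in> F)) \<longrightarrow>
         rk w < rk v \<or> (rk w = rk v \<and> (v,w) \<in> TG (rk v)))"
      proof (intro exI[of _ "\<lambda>x. if x \<in> t - Z then n else rk x"] exI[of _ "TG(n := tangle_graph V V0 E a t \<tau>)"] conjI allI impI)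
        fix k show "cycles_won pr a ((TG(n := tangle_graph V V0 E a t \<tau>)) k)" using TGw cwt by simp
      next
        fix v w assume v: "v \<in> Z' - A"
          and e: "(v \<in> player_vs W V0 a \<and> \<sigma>' v = Some w) \<or> (v \<in> player_vs W V0 (1-a) \<and> (v,w) \<in> F)"
        let ?rk = "\<lambda>x. if x \<in> t - Z then n else rk x"
        let ?TG = "TG(n := tangle_graph V V0 E a t \<tau>)"
        show "?rk w < ?rk v \<or> (?rk w = ?rk v \<and> (v,w) \<in> ?TG (?rk v))"
        proof (cases "v \<in> Z")
          case True
          hence vZ: "v \<in> Z - A" using v by auto
          have e': "(v \<in> player_vs W V0 a \<and> \<sigma> v = Some w) \<or> (v \<in> player_vs W V0 (1-a) \<and> (v,w) \<in> F)"
          proof -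
            have "v \<in> player_vs W V0 a \<Longrightarrow> v \<in> dom \<sigma>" using I3 vZ by auto
            thus ?thesis using e sig' by auto
          qed
          have wZ: "w \<in> Z" using e' I2 I4 vZ by blast
          have "rk v < n" using rkn True by simp
          thus ?thesis using RK vZ e' True wZ by auto
        next
          case False
          hence vt: "v \<in> t - Z" using v Z' by auto
          hence vnd: "v \<notin> dom \<sigma>" using domZ by auto
          show ?thesis
          proof (cases "v \<in> player_vs W V0 a")
            case True
            hence "\<tau> v = Some w" using e sig' vt vnd True disj by auto
            hence "(v,w) \<in> E" "w \<in> t" using tauE by auto
            show ?thesis
            proof (cases "w \<in> Z")
              case True thus ?thesis using vt rkn[of w] by auto
            next
              case False
              thus ?thesis using vt \<open>w \<in> t\<close> \<open>(v,w) \<in> E\<close> \<open>\<tau> v = Some w\<close>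
                unfolding tangle_graph_def by auto
            qed
          next
            case False
            hence vo: "v \<in> player_vs W V0 (1-a)" "(v,w) \<in> F" using e by auto
            show ?thesis
            proof (cases "w \<in> Z")
              case True thus ?thesis using vt rkn[of w] by auto
            next
              case False
              hence "w \<in> t" using esc[of v w] vt vo by auto
              moreover have "(v,w) \<in> E" using vo FE by auto
              moreover have "v \<in> player_vs V V0 (1-a)" using vo pvW by auto
              ultimately show ?thesis using vt False unfolding tangle_graph_def by auto
            qed
          qed
        qed
      qed
    qed
  qed
qed


lemma extract_Y_props:
  fixes W V0 F a Z \<sigma>
  defines "Yz \<equiv> extract_Y W V0 F a Z \<sigma>"
  shows "Yz \<subseteq> Z"
    and "\<And>v w. v \<in> Yz \<Longrightarrow> v \<in> player_vs W V0 (1-a) \<Longrightarrow> (v,w) \<in> F \<Longrightarrow> w \<in> Yz"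
    and "\<And>v. v \<in> Yz \<Longrightarrow> v \<in> player_vs W V0 a \<Longrightarrow> \<exists>w\<in>Yz. \<sigma> v = Some w"
proof -
  define \<Phi> where "\<Phi> = (\<lambda>X. {v \<in> Z. (v \<in> player_vs W V0 (1 - a) \<longrightarrow> (\<forall>w. (v, w) \<in> F \<longrightarrow> w \<in> X)) \<and>
                      (v \<in> player_vs W V0 a \<longrightarrow> (\<exists>w\<in>X. \<sigma> v = Some w))})"
  have mono: "mono \<Phi>" unfolding \<Phi>_def by (rule monoI) blast
  have Y: "Yz = \<Phi> Yz" unfolding Yz_def extract_Y_def \<Phi>_def[symmetric] by (rule gfp_unfold[OF mono])
  show "Yz \<subseteq> Z" by (subst Y) (auto simp: \<Phi>_def)
  show "\<And>v w. v \<in> Yz \<Longrightarrow> v \<in> player_vs W V0 (1-a) \<Longrightarrow> (v,w) \<in> F \<Longrightarrow> w \<in> Yz"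
    by (subst (asm) Y) (auto simp: \<Phi>_def)
  show "\<And>v. v \<in> Yz \<Longrightarrow> v \<in> player_vs W V0 a \<Longrightarrow> \<exists>w\<in>Yz. \<sigma> v = Some w"
    by (subst (asm) Y) (auto simp: \<Phi>_def)
qed

lemma extract_Y_full:
  assumes "X \<subseteq> Z" "\<And>v w. v \<in> X \<Longrightarrow> v \<in> player_vs W V0 (1-a) \<Longrightarrow> (v,w) \<in> F \<Longrightarrow> w \<in> X"
    "\<And>v. v \<in> X \<Longrightarrow> v \<in> player_vs W V0 a \<Longrightarrow> \<exists>w\<in>X. \<sigma> v = Some w"
  shows "X \<subseteq> extract_Y W V0 F a Z \<sigma>"
  unfolding extract_Y_def by (rule gfp_upperbound) (use assms in blast)

lemma cycles_won_mono: "cycles_won pr a H \<Longrightarrow> G \<subseteq> H \<Longrightarrow> cycles_won pr a G"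
  unfolding cycles_won_def by blast

context
  fixes V V0 :: "'v set" and E :: "('v \<times> 'v) set" and pr :: "'v \<Rightarrow> nat"
    and W :: "'v set" and F :: "('v \<times> 'v) set" and a :: nat and A Z :: "'v set" and \<sigma> :: "'v \<rightharpoonup> 'v"
  assumes inv: "attr_inv W V0 F pr a A Z \<sigma>"
    and WV: "W \<subseteq> V" and FE: "F = E \<inter> (W \<times> W)" and a2: "a < 2"
    and Atop: "\<forall>v\<in>A. pr v mod 2 = a \<and> (\<forall>w\<in>W. pr w \<le> pr v)"
    and finW: "finite W"
begin

abbreviation "Yz \<equiv> extract_Y W V0 F a Z \<sigma>"
abbreviation "H \<equiv> extract_graph W V0 F a Z \<sigma>"

lemma H_def': "H = {(v, w). v \<in> Yz \<inter> player_vs W V0 a \<and> \<sigma> v = Some w} \<union>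
     {(v, w). (v, w) \<in> F \<and> v \<in> Yz \<inter> player_vs W V0 (1 - a)}"
  by (simp add: extract_graph_def)

lemma ZW: "Z \<subseteq> W" and domZ: "dom \<sigma> \<subseteq> Z \<inter> player_vs W V0 a"
  and I2: "\<forall>v w. \<sigma> v = Some w \<longrightarrow> (v,w) \<in> F \<and> w \<in> Z"
  using inv unfolding attr_inv_def by blast+

lemma Y1: "Yz \<subseteq> Z" by (rule extract_Y_props(1))
lemma Y2: "v \<in> Yz \<Longrightarrow> v \<in> player_vs W V0 (1-a) \<Longrightarrow> (v,w) \<in> F \<Longrightarrow> w \<in> Yz" by (rule extract_Y_props(2))
lemma Y3: "v \<in> Yz \<Longrightarrow> v \<in> player_vs W V0 a \<Longrightarrow> \<exists>w\<in>Yz. \<sigma> v = Some w" by (rule extract_Y_props(3))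

lemma H_edge: assumes "(v,w) \<in> H" shows "v \<in> Yz \<and> w \<in> Yz \<and> (v,w) \<in> F"
  using assms unfolding H_def'
proof (elim UnE)
  assume "(v,w) \<in> {(v, w). v \<in> Yz \<inter> player_vs W V0 a \<and> \<sigma> v = Some w}"
  hence h: "v \<in> Yz" "v \<in> player_vs W V0 a" "\<sigma> v = Some w" by auto
  obtain w' where "w' \<in> Yz" "\<sigma> v = Some w'" using Y3[OF h(1,2)] by blast
  thus ?thesis using h I2 by auto
next
  assume "(v,w) \<in> {(v, w). (v, w) \<in> F \<and> v \<in> Yz \<inter> player_vs W V0 (1 - a)}"
  thus ?thesis using Y2 by auto
qed

lemma Y_sub_W: "Yz \<subseteq> W" using Y1 ZW by blast

lemma H_cycles: "cycles_won pr a H"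
  unfolding cycles_won_def
proof (intro allI impI)
  fix c assume c: "c \<noteq> [] \<and> (\<forall>i<length c. (c ! i, c ! (Suc i mod length c)) \<in> H)"
  obtain rk :: "'v \<Rightarrow> nat" and TG where TGw: "\<forall>k. cycles_won pr a (TG k)"
    and RK: "\<forall>v w. v \<in> Z - A \<longrightarrow> ((v \<in> player_vs W V0 a \<and> \<sigma> v = Some w) \<or> (v \<in> player_vs W V0 (1-a) \<and> (v,w) \<in> F)) \<longrightarrow>
         rk w < rk v \<or> (rk w = rk v \<and> (v,w) \<in> TG (rk v))"
    using inv unfolding attr_inv_def by blast
  have cW: "set c \<subseteq> W"
  proof
    fix x assume "x \<in> set c"
    then obtain i where i: "i < length c" "c ! i = x" by (auto simp: in_set_conv_nth)
    hence "(x, c ! (Suc i mod length c)) \<in> H" using c by auto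
    thus "x \<in> W" using H_edge Y_sub_W by blast
  qed
  show "Max (pr ` set c) mod 2 = a"
  proof (rule rank_cycle[where G = H and A = A and rk = rk and TG = TG])
    show "c \<noteq> []" using c by simp
    show "\<forall>i<length c. (c ! i, c ! (Suc i mod length c)) \<in> H" using c by simp
    show "\<forall>k. cycles_won pr a (TG k)" by (rule TGw)
    show "\<forall>x\<in>A. pr x mod 2 = a \<and> (\<forall>w\<in>set c. pr w \<le> pr x)" using Atop cW by blast
    show "\<forall>v w. (v, w) \<in> H \<longrightarrow> v \<notin> A \<longrightarrow> rk w < rk v \<or> rk w = rk v \<and> (v, w) \<in> TG (rk v)"
    proof (intro allI impI)
      fix v w assume e: "(v,w) \<in> H" "v \<notin> A"
      have "v \<in> Z" using H_edge[OF e(1)] Y1 by blast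
      moreover have "(v \<in> player_vs W V0 a \<and> \<sigma> v = Some w) \<or> (v \<in> player_vs W V0 (1-a) \<and> (v,w) \<in> F)"
        using e(1) unfolding H_def' by blast
      ultimately show "rk w < rk v \<or> rk w = rk v \<and> (v, w) \<in> TG (rk v)" using RK e(2) by blast
    qed
  qed
qed

lemma extract_tangle:
  assumes "p \<in> extract_tangles W V0 F a Z \<sigma>"
  shows "snd p = \<sigma> |` fst p" and "tangle_witness V V0 E pr (fst p) (snd p)"
    and "Max (pr ` fst p) mod 2 = a" and "tangle_escapes W V0 F pr (fst p) = {}" and "fst p \<subseteq> Z"
proof -
  have "\<exists>C. p = (C, \<sigma> |` C) \<and> (\<exists>u \<in> Yz.
           C = {w. (u, w) \<in> H\<^sup>* \<and> (w, u) \<in> H\<^sup>*} \<and>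
           (\<forall>v w. (v, w) \<in> H \<longrightarrow> v \<in> C \<longrightarrow> w \<in> C) \<and>
           (\<exists>v\<in>C. \<exists>w\<in>C. (v, w) \<in> H))"
    using assms unfolding extract_tangles_def Let_def by simp
  then obtain C where p: "p = (C, \<sigma> |` C)" and "\<exists>u \<in> Yz.
           C = {w. (u, w) \<in> H\<^sup>* \<and> (w, u) \<in> H\<^sup>*} \<and>
           (\<forall>v w. (v, w) \<in> H \<longrightarrow> v \<in> C \<longrightarrow> w \<in> C) \<and>
           (\<exists>v\<in>C. \<exists>w\<in>C. (v, w) \<in> H)" by (elim exE conjE)
  then obtain u where u: "u \<in> Yz" and rest: "C = {w. (u, w) \<in> H\<^sup>* \<and> (w, u) \<in> H\<^sup>*} \<and>
           (\<forall>v w. (v, w) \<in> H \<longrightarrow> v \<in> C \<longrightarrow> w \<in> C) \<and>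
           (\<exists>v\<in>C. \<exists>w\<in>C. (v, w) \<in> H)" by (elim bexE)
  have Cdef: "C = {w. (u, w) \<in> H\<^sup>* \<and> (w, u) \<in> H\<^sup>*}"
    and cl: "\<forall>v w. (v, w) \<in> H \<longrightarrow> v \<in> C \<longrightarrow> w \<in> C" and ed: "\<exists>v\<in>C. \<exists>w\<in>C. (v, w) \<in> H"
    using rest by blast+
  show "snd p = \<sigma> |` fst p" using p by simp
  have reachC: "y \<in> C" if "(x,y) \<in> H\<^sup>*" "x \<in> C" for x y
    using that(1)
  proof (induction rule: rtrancl_induct)
    case base show ?case by (rule that(2))
  next
    case (step y z) thus ?case using cl by blast
  qed
  have CY: "C \<subseteq> Yz"
  proof
    fix w assume "w \<in> C"
    hence "(u,w) \<in> H\<^sup>*" using Cdef by simp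
    thus "w \<in> Yz"
    proof (induction rule: rtrancl_induct)
      case base show ?case by (rule u)
    next
      case (step y z) thus ?case using H_edge by blast
    qed
  qed
  have CZ: "C \<subseteq> Z" using CY Y1 by blast
  have CW: "C \<subseteq> W" using CZ ZW by blast
  have finC: "finite C" using CW finW finite_subset by blast
  have Cne: "C \<noteq> {}" using ed by blast
  have conn: "(x,y) \<in> H\<^sup>*" if "x \<in> C" "y \<in> C" for x y
  proof -
    have "(x,u) \<in> H\<^sup>*" "(u,y) \<in> H\<^sup>*" using that Cdef by auto
    thus ?thesis by (rule rtrancl_trans)
  qed
  obtain m where m: "m \<in> C" "pr m = Max (pr ` C)"
  proof -
    have "Max (pr ` C) \<in> pr ` C" using finC Cne by simp
    then obtain m' where "Max (pr ` C) = pr m'" "m' \<in> C" by (rule imageE)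
    thus thesis using that[of m'] by simp
  qed
  obtain v w where vw: "v \<in> C" "w \<in> C" "(v,w) \<in> H" using ed by blast
  have "(m,m) \<in> H\<^sup>+"
  proof -
    have "(m,w) \<in> H\<^sup>+" using conn[OF m(1) vw(1)] vw(3) by (rule rtrancl_into_trancl1)
    thus ?thesis using conn[OF vw(2) m(1)] by (rule trancl_rtrancl_trancl)
  qed
  from trancl_cycle[OF this] obtain c where
    c0: "c \<noteq> [] \<and> m \<in> set c \<and> (\<forall>i<length c. (c!i, c!(Suc i mod length c)) \<in> H)
    \<and> set c \<subseteq> {z. (m,z) \<in> H\<^sup>*}" by (rule exE)
  have c: "c \<noteq> []" "m \<in> set c" "\<forall>i<length c. (c!i, c!(Suc i mod length c)) \<in> H"
    "set c \<subseteq> {z. (m,z) \<in> H\<^sup>*}" using c0 by auto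
  have cC: "set c \<subseteq> C"
  proof
    fix z assume "z \<in> set c"
    hence "(m,z) \<in> H\<^sup>*" using c(4) by auto
    thus "z \<in> C" using reachC m(1) by blast
  qed
  have "Max (pr ` set c) mod 2 = a"
    using H_cycles[unfolded cycles_won_def, rule_format, OF conjI[OF c(1) c(3)]] .
  moreover have "Max (pr ` set c) = pr m"
  proof (rule antisym)
    show "Max (pr ` set c) \<le> pr m" using cC m finC c(1) by (intro Max.boundedI) auto
    show "pr m \<le> Max (pr ` set c)" using c(2) by (intro Max_ge) auto
  qed
  ultimately have par: "Max (pr ` C) mod 2 = a" using m by simp
  thus "Max (pr ` fst p) mod 2 = a" using p by simp
  have esc: "tangle_escapes W V0 F pr C = {}"
  proof -
    have "v \<in> C" if "x \<in> C" "x \<in> player_vs W V0 (1-a)" "(x,v) \<in> F" for x v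
    proof -
      have "(x,v) \<in> H" using that CY unfolding H_def' by blast
      thus ?thesis using cl that(1) by blast
    qed
    thus ?thesis unfolding tangle_escapes_def par by blast
  qed
  thus "tangle_escapes W V0 F pr (fst p) = {}" using p by simp
  show "fst p \<subseteq> Z" using p CZ by simp
  define TG where "TG = tangle_graph V V0 E a C (\<sigma> |` C)"
  have pvW: "player_vs W V0 b = W \<inter> player_vs V V0 b" for b using player_vs_sub[OF WV] .
  have TGH: "TG \<subseteq> H"
  proof
    fix e assume "e \<in> TG"
    then obtain x y where e: "e = (x,y)" and
      "((x,y) \<in> E \<and> x \<in> C \<and> (\<sigma> |` C) x = Some y) \<or> ((x,y) \<in> E \<and> x \<in> C \<inter> player_vs V V0 (1-a) \<and> y \<in> C)"
      unfolding TG_def tangle_graph_def by blast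
    thus "e \<in> H"
    proof (elim disjE)
      assume h: "(x,y) \<in> E \<and> x \<in> C \<and> (\<sigma> |` C) x = Some y"
      hence "\<sigma> x = Some y" by (auto simp: restrict_map_def split: if_splits)
      hence "x \<in> player_vs W V0 a" using domZ by auto
      thus ?thesis using h CY \<open>\<sigma> x = Some y\<close> e unfolding H_def' by blast
    next
      assume h: "(x,y) \<in> E \<and> x \<in> C \<inter> player_vs V V0 (1-a) \<and> y \<in> C"
      hence "(x,y) \<in> F" "x \<in> player_vs W V0 (1-a)" using FE CW pvW by auto
      thus ?thesis using h CY e unfolding H_def' by blast
    qed
  qed
  have HTG: "(x,y) \<in> TG" if "(x,y) \<in> H" "x \<in> C" for x y
  proof -
    have yC: "y \<in> C" using cl that by blast
    have "(x,y) \<in> F" using H_edge[OF that(1)] by blast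
    hence xyE: "(x,y) \<in> E" using FE by blast
    from that(1) show ?thesis unfolding H_def'
    proof (elim UnE)
      assume "(x,y) \<in> {(v, w). v \<in> Yz \<inter> player_vs W V0 a \<and> \<sigma> v = Some w}"
      thus ?thesis using that(2) xyE unfolding TG_def tangle_graph_def by auto
    next
      assume "(x,y) \<in> {(v, w). (v, w) \<in> F \<and> v \<in> Yz \<inter> player_vs W V0 (1 - a)}"
      thus ?thesis using that(2) xyE yC pvW unfolding TG_def tangle_graph_def by auto
    qed
  qed
  have liftTG: "y \<in> C \<and> (x,y) \<in> TG\<^sup>*" if "(x,y) \<in> H\<^sup>*" "x \<in> C" for x y
    using that(1)
  proof (induction rule: rtrancl_induct)
    case base thus ?case using that(2) by simp
  next
    case (step y z)
    thus ?case using HTG[of y z] cl by (meson rtrancl.rtrancl_into_rtrancl)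
  qed
  have domr: "dom (\<sigma> |` C) = C \<inter> player_vs V V0 a"
  proof
    show "dom (\<sigma> |` C) \<subseteq> C \<inter> player_vs V V0 a" using domZ pvW by auto
    show "C \<inter> player_vs V V0 a \<subseteq> dom (\<sigma> |` C)"
    proof
      fix x assume x: "x \<in> C \<inter> player_vs V V0 a"
      hence "x \<in> player_vs W V0 a" using CW pvW by auto
      then obtain y where "\<sigma> x = Some y" using Y3[of x] CY x by blast
      thus "x \<in> dom (\<sigma> |` C)" using x by auto
    qed
  qed
  have ranr: "ran (\<sigma> |` C) \<subseteq> C"
  proof
    fix y assume "y \<in> ran (\<sigma> |` C)"
    then obtain x where x: "(\<sigma> |` C) x = Some y" by (auto simp: ran_def)
    hence xC: "x \<in> C" and sx: "\<sigma> x = Some y" by (auto simp: restrict_map_def split: if_splits)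
    hence "x \<in> player_vs W V0 a" using domZ by auto
    hence "(x,y) \<in> H" using xC CY sx unfolding H_def' by blast
    thus "y \<in> C" using cl xC by blast
  qed
  have strat: "strategy V V0 E a (\<sigma> |` C)"
    unfolding strategy_def
  proof (intro conjI allI impI)
    show "dom (\<sigma> |` C) \<subseteq> player_vs V V0 a" using domr by auto
    fix x y assume "(\<sigma> |` C) x = Some y"
    hence "\<sigma> x = Some y" by (auto simp: restrict_map_def split: if_splits)
    thus "(x,y) \<in> E" using I2 FE by blast
  qed
  have "tangle_witness V V0 E pr C (\<sigma> |` C)"
    unfolding tangle_witness_def Let_def par
  proof (intro conjI ballI strat domr ranr)
    show "C \<noteq> {}" by (rule Cne)
    show "C \<subseteq> V" using CW WV by blast
    fix x y assume "x \<in> C" "y \<in> C"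
    thus "(x,y) \<in> (tangle_graph V V0 E a C (\<sigma> |` C))\<^sup>*" using liftTG conn unfolding TG_def by blast
  next
    show "cycles_won pr a (tangle_graph V V0 E a C (\<sigma> |` C))"
      using cycles_won_mono[OF H_cycles TGH] unfolding TG_def .
  qed
  thus "tangle_witness V V0 E pr (fst p) (snd p)" using p by simp
qed

end


lemma term_facts:
  assumes trm: "\<forall>s'. \<not> attr_step W V0 F pr TT a A (Z,\<sigma>) s'"
  shows term_np: "\<not> attr_pending W V0 F a A Z \<sigma>"
    and term_own: "\<And>v w. v \<in> player_vs W V0 a \<Longrightarrow> v \<notin> Z \<Longrightarrow> (v,w) \<in> F \<Longrightarrow> w \<notin> Z"
    and term_opp: "\<And>v. v \<in> player_vs W V0 (1-a) \<Longrightarrow> v \<notin> Z \<Longrightarrow> \<exists>w. (v,w) \<in> F \<and> w \<notin> Z"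
    and term_tan: "\<And>t \<tau>. (t,\<tau>) \<in> TT \<Longrightarrow> Max (pr`t) mod 2 = a \<Longrightarrow> \<not> t \<subseteq> Z \<Longrightarrow>
          tangle_escapes W V0 F pr t \<noteq> {} \<Longrightarrow> \<not> tangle_escapes W V0 F pr t \<subseteq> Z"
proof -
  show np: "\<not> attr_pending W V0 F a A Z \<sigma>"
  proof
    assume "attr_pending W V0 F a A Z \<sigma>"
    then obtain a0 w where "a0 \<in> A \<inter> player_vs W V0 a" "a0 \<notin> dom \<sigma>" "(a0, w) \<in> F" "w \<in> Z"
      unfolding attr_pending_def by blast
    hence "attr_step W V0 F pr TT a A (Z,\<sigma>) (Z, \<sigma>(a0 \<mapsto> w))" by (rule attr_step.target_strat)
    thus False using trm by blast
  qed
  show "w \<notin> Z" if "v \<in> player_vs W V0 a" "v \<notin> Z" "(v,w) \<in> F" for v w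
  proof
    assume "w \<in> Z"
    hence "attr_step W V0 F pr TT a A (Z,\<sigma>) (insert v Z, \<sigma>(v \<mapsto> w))"
      using np that by (intro attr_step.add_own)
    thus False using trm by blast
  qed
  show "\<exists>w. (v,w) \<in> F \<and> w \<notin> Z" if "v \<in> player_vs W V0 (1-a)" "v \<notin> Z" for v
  proof (rule ccontr)
    assume "\<not> (\<exists>w. (v,w) \<in> F \<and> w \<notin> Z)"
    hence "\<forall>w. (v, w) \<in> F \<longrightarrow> w \<in> Z" by blast
    hence "attr_step W V0 F pr TT a A (Z,\<sigma>) (insert v Z, \<sigma>)"
      using np that by (intro attr_step.add_opp)
    thus False using trm by blast
  qed
  show "\<not> tangle_escapes W V0 F pr t \<subseteq> Z" if "(t,\<tau>) \<in> TT" "Max (pr`t) mod 2 = a" "\<not> t \<subseteq> Z"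
          "tangle_escapes W V0 F pr t \<noteq> {}" for t \<tau>
  proof
    assume "tangle_escapes W V0 F pr t \<subseteq> Z"
    hence "attr_step W V0 F pr TT a A (Z,\<sigma>) (Z \<union> t, \<lambda>u. if u \<in> t \<inter> player_vs W V0 a \<and> u \<notin> dom \<sigma> then \<tau> u else \<sigma> u)"
      using np that by (intro attr_step.add_tangle)
    thus False using trm by blast
  qed
qed

lemma esc_restrict:
  assumes "C \<subseteq> W" "W \<subseteq> V"
  shows "tangle_escapes W V0 (E \<inter> (W \<times> W)) pr C = tangle_escapes V V0 E pr C \<inter> W"
  using assms unfolding tangle_escapes_def player_vs_def by auto


lemma extract_nonempty:
  fixes W V0 :: "'v set"
  assumes inv: "attr_inv W V0 F pr a A Z \<sigma>"
    and WV: "W \<subseteq> V" and FE: "F = E \<inter> (W \<times> W)" and a2: "a < 2"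
    and Atop: "\<forall>v\<in>A. pr v mod 2 = a \<and> (\<forall>w\<in>W. pr w \<le> pr v)"
    and finW: "finite W"
    and trm: "\<forall>s'. \<not> attr_step W V0 F pr TT a A (Z,\<sigma>) s'"
    and ZW: "Z = W" and Wne: "W \<noteq> {}" and game: "\<forall>v\<in>W. \<exists>w\<in>W. (v,w) \<in> E"
  shows "extract_tangles W V0 F a Z \<sigma> \<noteq> {}"
proof -
  have AZ: "A \<subseteq> Z" and domZ: "dom \<sigma> \<subseteq> Z \<inter> player_vs W V0 a"
    and I2: "\<forall>v w. \<sigma> v = Some w \<longrightarrow> (v,w) \<in> F \<and> w \<in> Z"
    and I3: "\<forall>v \<in> Z \<inter> player_vs W V0 a - A. v \<in> dom \<sigma>"
    using inv unfolding attr_inv_def by blast+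
  have np: "\<not> attr_pending W V0 F a A Z \<sigma>" by (rule term_np[OF trm])
  have hasS: "\<exists>w\<in>W. \<sigma> v = Some w" if "v \<in> W" "v \<in> player_vs W V0 a" for v
  proof -
    have "v \<in> dom \<sigma>"
    proof (cases "v \<in> A")
      case True
      from game that(1) obtain w where w: "w \<in> W" "(v,w) \<in> E" by blast
      have vw: "(v,w) \<in> F" "w \<in> Z" using FE that(1) ZW w by auto
      show ?thesis
      proof (rule ccontr)
        assume "v \<notin> dom \<sigma>"
        hence "attr_pending W V0 F a A Z \<sigma>" unfolding attr_pending_def
          using True that(2) vw by blast
        thus False using np by contradiction
      qed
    next
      case False thus ?thesis using I3 that(1,2) ZW by blast
    qed
    then obtain w where "\<sigma> v = Some w" by blast
    thus ?thesis using I2 ZW by blast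
  qed
  have YW: "W \<subseteq> extract_Y W V0 F a Z \<sigma>"
  proof (rule extract_Y_full)
    show "W \<subseteq> Z" using ZW by simp
    show "\<And>v w. v \<in> W \<Longrightarrow> v \<in> player_vs W V0 (1-a) \<Longrightarrow> (v,w) \<in> F \<Longrightarrow> w \<in> W" using FE by blast
    show "\<And>v. v \<in> W \<Longrightarrow> v \<in> player_vs W V0 a \<Longrightarrow> \<exists>w\<in>W. \<sigma> v = Some w" by (rule hasS)
  qed
  have Yeq: "extract_Y W V0 F a Z \<sigma> = W"
    using YW Y1[OF inv WV FE a2 Atop finW] ZW by blast
  define H where "H = extract_graph W V0 F a Z \<sigma>"
  have Hd: "H = {(v, w). v \<in> W \<inter> player_vs W V0 a \<and> \<sigma> v = Some w} \<union>
     {(v, w). (v, w) \<in> F \<and> v \<in> W \<inter> player_vs W V0 (1 - a)}"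
    using H_def'[OF inv WV FE a2 Atop finW] unfolding H_def Yeq .
  have succ: "\<forall>v\<in>W. \<exists>w. (v,w) \<in> H"
  proof
    fix v assume v: "v \<in> W"
    show "\<exists>w. (v,w) \<in> H"
    proof (cases "v \<in> player_vs W V0 a")
      case True
      then obtain w where "\<sigma> v = Some w" using hasS v by blast
      thus ?thesis using v True unfolding Hd by blast
    next
      case False
      hence "v \<in> player_vs W V0 (1-a)" using v a2 by (auto simp: player_vs_def)
      obtain w where "w \<in> W" "(v,w) \<in> E" using game v by blast
      hence "(v,w) \<in> F" using FE v by auto
      thus ?thesis using v \<open>v \<in> player_vs W V0 (1-a)\<close> unfolding Hd by blast
    qed
  qed
  have cl: "\<forall>v w. (v,w) \<in> H \<longrightarrow> v \<in> W \<longrightarrow> w \<in> W"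
    using H_edge[OF inv WV FE a2 Atop finW] Yeq unfolding H_def by blast
  obtain u where u: "u \<in> W"
    and b1: "\<forall>v w. (v,w) \<in> H \<longrightarrow> v \<in> {w. (u,w) \<in> H\<^sup>* \<and> (w,u) \<in> H\<^sup>*} \<longrightarrow> w \<in> {w. (u,w) \<in> H\<^sup>* \<and> (w,u) \<in> H\<^sup>*}"
    and b2: "\<exists>v\<in>{w. (u,w) \<in> H\<^sup>* \<and> (w,u) \<in> H\<^sup>*}. \<exists>w\<in>{w. (u,w) \<in> H\<^sup>* \<and> (w,u) \<in> H\<^sup>*}. (v,w) \<in> H"
    using bottom_scc[OF finW Wne succ cl] by blast
  define C where "C = {w. (u,w) \<in> H\<^sup>* \<and> (w,u) \<in> H\<^sup>*}"
  have "(C, \<sigma> |` C) \<in> extract_tangles W V0 F a Z \<sigma>"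
    unfolding extract_tangles_def Let_def H_def[symmetric] Yeq
  proof (rule CollectI, rule exI[of _ C], rule conjI[OF refl], rule bexI[OF _ u], intro conjI)
    show "C = {w. (u,w) \<in> H\<^sup>* \<and> (w,u) \<in> H\<^sup>*}" by (rule C_def)
    show "\<forall>v w. (v,w) \<in> H \<longrightarrow> v \<in> C \<longrightarrow> w \<in> C" using b1 unfolding C_def .
    show "\<exists>v\<in>C. \<exists>w\<in>C. (v,w) \<in> H" using b2 unfolding C_def .
  qed
  thus ?thesis by blast
qed


definition goodT :: "'v set \<Rightarrow> 'v set \<Rightarrow> ('v \<times> 'v) set \<Rightarrow> ('v \<Rightarrow> nat) \<Rightarrow> ('v set \<times> ('v \<rightharpoonup> 'v)) set \<Rightarrow> bool" where
  "goodT V V0 E pr T \<longleftrightarrow> (\<forall>p\<in>T. tangle_witness V V0 E pr (fst p) (snd p))"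

definition game_ok :: "'v set \<Rightarrow> ('v \<times> 'v) set \<Rightarrow> ('v \<rightharpoonup> nat) \<Rightarrow> bool" where
  "game_ok V E r \<longleftrightarrow> (\<forall>v\<in>sub_V V r. \<exists>w\<in>sub_V V r. (v,w) \<in> E)"

definition past_ok :: "'v set \<Rightarrow> 'v set \<Rightarrow> ('v \<times> 'v) set \<Rightarrow> ('v \<Rightarrow> nat) \<Rightarrow> ('v set \<times> ('v \<rightharpoonup> 'v)) set \<Rightarrow> ('v \<rightharpoonup> nat) \<Rightarrow> bool" where
  "past_ok V V0 E pr T r \<longleftrightarrow> (\<forall>p\<in>T. fst p \<subseteq> sub_V V r \<longrightarrow> fst p \<noteq> {} \<longrightarrow>
      tangle_escapes V V0 E pr (fst p) = {} \<or> tangle_escapes V V0 E pr (fst p) \<inter> sub_V V r \<noteq> {})"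

lemma pv_other: "(a::nat) < 2 \<Longrightarrow> v \<in> W \<Longrightarrow> v \<notin> player_vs W V0 a \<Longrightarrow> v \<in> player_vs W V0 (1 - a)"
  by (auto simp: player_vs_def)

context
  fixes V V0 :: "'v set" and E :: "('v \<times> 'v) set" and pr :: "'v \<Rightarrow> nat"
  assumes pg: "parity_game V V0 E pr"
begin

lemma finV: "finite V" and EV: "E \<subseteq> V \<times> V" and succV: "\<forall>v\<in>V. \<exists>w. (v,w) \<in> E"
  using pg unfolding parity_game_def by auto

lemma WV: "sub_V V r \<subseteq> V" by (auto simp: sub_V_def)
lemma finW: "finite (sub_V V r)" using WV finV finite_subset by blast
lemma FE: "sub_E V E r = E \<inter> (sub_V V r \<times> sub_V V r)" by (simp add: sub_E_def)
lemma a2: "sub_top V pr r mod 2 < 2" by simp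
lemma Atop: "\<forall>v\<in>sub_target V pr r. pr v mod 2 = sub_top V pr r mod 2 \<and> (\<forall>w\<in>sub_V V r. pr w \<le> pr v)"
  using finW unfolding sub_target_def sub_top_def by auto
lemma tgt_sub: "sub_target V pr r \<subseteq> sub_V V r" by (auto simp: sub_target_def)
lemma tgt_ne: "sub_V V r \<noteq> {} \<Longrightarrow> sub_target V pr r \<noteq> {}"
proof -
  assume ne: "sub_V V r \<noteq> {}"
  have "Max (pr ` sub_V V r) \<in> pr ` sub_V V r" using finW ne by simp
  then obtain v where "Max (pr ` sub_V V r) = pr v" "v \<in> sub_V V r" by (rule imageE)
  hence "v \<in> sub_target V pr r" by (simp add: sub_target_def sub_top_def)
  thus ?thesis by blast
qed
lemma TTok: "goodT V V0 E pr T \<Longrightarrow> \<forall>p\<in>sub_T V T r. fst p \<subseteq> sub_V V r \<and> tangle_witness V V0 E pr (fst p) (snd p)"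
  unfolding goodT_def sub_T_def by auto
lemma subV_next: "sub_V V (\<lambda>v. if v \<in> Z then Some p else r v) = sub_V V r - Z"
  unfolding sub_V_def by (auto simp: dom_def)

lemma next_game:
  assumes game: "game_ok V E r"
    and trm: "\<forall>s'. \<not> attr_step (sub_V V r) V0 (sub_E V E r) pr TT (sub_top V pr r mod 2) A (Z,\<sigma>) s'"
  shows "game_ok V E (\<lambda>v. if v \<in> Z then Some p else r v)"
  unfolding game_ok_def subV_next
proof
  fix v assume v: "v \<in> sub_V V r - Z"
  have vW: "v \<in> sub_V V r" and vZ: "v \<notin> Z" using v by auto
  from game vW obtain w where w: "w \<in> sub_V V r" "(v,w) \<in> E" unfolding game_ok_def by blast
  show "\<exists>w\<in>sub_V V r - Z. (v,w) \<in> E"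
  proof (cases "v \<in> player_vs (sub_V V r) V0 (sub_top V pr r mod 2)")
    case True
    have "(v,w) \<in> sub_E V E r" using w vW by (simp add: sub_E_def)
    hence "w \<notin> Z" by (rule term_own[OF trm True vZ])
    thus ?thesis using w by blast
  next
    case False
    have "v \<in> player_vs (sub_V V r) V0 (1 - sub_top V pr r mod 2)" by (rule pv_other[OF a2 vW False])
    from term_opp[OF trm this vZ] obtain w' where "(v,w') \<in> sub_E V E r" "w' \<notin> Z" by blast
    thus ?thesis by (auto simp: sub_E_def)
  qed
qed

lemma next_past:
  assumes past: "past_ok V V0 E pr T r" and gT: "goodT V V0 E pr T"
    and trm: "\<forall>s'. \<not> attr_step (sub_V V r) V0 (sub_E V E r) pr (sub_T V T r) (sub_top V pr r mod 2) A (Z,\<sigma>) s'"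
  shows "past_ok V V0 E pr T (\<lambda>v. if v \<in> Z then Some p else r v)"
  unfolding past_ok_def subV_next
proof (intro ballI impI)
  fix q assume q: "q \<in> T" "fst q \<subseteq> sub_V V r - Z" "fst q \<noteq> {}"
  define C where "C = fst q"
  define W where "W = sub_V V r"
  define a where "a = sub_top V pr r mod 2"
  have CW: "C \<subseteq> W" using q(2) by (auto simp: C_def W_def)
  have old: "tangle_escapes V V0 E pr C = {} \<or> tangle_escapes V V0 E pr C \<inter> W \<noteq> {}"
    using past q unfolding past_ok_def C_def W_def by blast
  show "tangle_escapes V V0 E pr (fst q) = {} \<or> tangle_escapes V V0 E pr (fst q) \<inter> (sub_V V r - Z) \<noteq> {}"
  proof (rule ccontr)
    assume "\<not> ?thesis"
    hence ne: "tangle_escapes V V0 E pr C \<inter> W \<noteq> {}" and sub: "tangle_escapes V V0 E pr C \<inter> W \<subseteq> Z"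
      using old unfolding C_def W_def by blast+
    show False
    proof (cases "Max (pr ` C) mod 2 = a")
      case True
      have qT: "(C, snd q) \<in> sub_T V T r" using q(1) CW unfolding sub_T_def C_def W_def by auto
      have escW: "tangle_escapes W V0 (sub_E V E r) pr C = tangle_escapes V V0 E pr C \<inter> W"
        unfolding FE W_def[symmetric] by (rule esc_restrict[OF CW]) (simp add: W_def WV)
      have "\<not> C \<subseteq> Z" using q(2,3) unfolding C_def by blast
      moreover have "tangle_escapes W V0 (sub_E V E r) pr C \<noteq> {}" using ne escW by simp
      ultimately have "\<not> tangle_escapes W V0 (sub_E V E r) pr C \<subseteq> Z"
        using term_tan[OF trm qT True[unfolded a_def]] unfolding W_def by blast
      thus False using sub escW by simp
    next
      case False
      obtain w where w: "w \<in> tangle_escapes V V0 E pr C" "w \<in> W" using ne by blast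
      then obtain u where u: "u \<in> C" "u \<in> player_vs V V0 (1 - Max (pr ` C) mod 2)" "(u,w) \<in> E"
        unfolding tangle_escapes_def by blast
      have "1 - Max (pr ` C) mod 2 = a" using False unfolding a_def by auto
      hence uW: "u \<in> player_vs W V0 a" using u CW by (auto simp: player_vs_def)
      have "(u,w) \<in> sub_E V E r" using u(1,3) w(2) CW FE unfolding W_def by auto
      moreover have "u \<notin> Z" using u(1) q(2) unfolding C_def by blast
      ultimately have "w \<notin> Z" using term_own[OF trm uW[unfolded a_def W_def]] by blast
      thus False using w sub by blast
    qed
  qed
qed

lemma ext_notin:
  assumes past: "past_ok V V0 E pr T r"
    and inv: "attr_inv (sub_V V r) V0 (sub_E V E r) pr (sub_top V pr r mod 2) (sub_target V pr r) Z \<sigma>"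
    and e: "e \<in> extract_tangles (sub_V V r) V0 (sub_E V E r) (sub_top V pr r mod 2) Z \<sigma>"
    and esc: "tangle_escapes V V0 E pr (fst e) \<noteq> {}"
  shows "e \<notin> T"
proof
  assume eT: "e \<in> T"
  note ex = extract_tangle[OF inv WV FE a2 Atop finW e]
  have ZW: "Z \<subseteq> sub_V V r" using inv unfolding attr_inv_def by blast
  have CW: "fst e \<subseteq> sub_V V r" using ex(5) ZW by blast
  have "fst e \<noteq> {}" using ex(2) by (simp add: tangle_witness_def)
  moreover have "fst e \<subseteq> sub_V V r \<longrightarrow> fst e \<noteq> {} \<longrightarrow>
      tangle_escapes V V0 E pr (fst e) = {} \<or> tangle_escapes V V0 E pr (fst e) \<inter> sub_V V r \<noteq> {}"
    using past eT unfolding past_ok_def by (rule bspec)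
  ultimately have "tangle_escapes V V0 E pr (fst e) \<inter> sub_V V r \<noteq> {}"
    using CW esc by blast
  moreover have "tangle_escapes (sub_V V r) V0 (sub_E V E r) pr (fst e) = tangle_escapes V V0 E pr (fst e) \<inter> sub_V V r"
    unfolding FE by (rule esc_restrict[OF CW WV])
  ultimately show False using ex(4) by simp
qed

end


definition sinv :: "'v set \<Rightarrow> 'v set \<Rightarrow> ('v \<times> 'v) set \<Rightarrow> ('v \<Rightarrow> nat) \<Rightarrow> 'v search_state \<Rightarrow> bool" where
  "sinv V V0 E pr s = (case s of
     Loop T r Y \<Rightarrow> goodT V V0 E pr T \<and> goodT V V0 E pr Y \<and> game_ok V E r \<and> past_ok V V0 E pr T r
         \<and> (sub_V V r = {} \<longrightarrow> \<not> Y \<subseteq> T)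
   | Attr T r Y Z \<sigma> \<Rightarrow> goodT V V0 E pr T \<and> goodT V V0 E pr Y \<and> game_ok V E r \<and> past_ok V V0 E pr T r
         \<and> sub_V V r \<noteq> {}
         \<and> attr_inv (sub_V V r) V0 (sub_E V E r) pr (sub_top V pr r mod 2) (sub_target V pr r) Z \<sigma>
   | Return T'' t \<Rightarrow> tangle_witness V V0 E pr (fst t) (snd t) \<and> tangle_escapes V V0 E pr (fst t) = {})"

context
  fixes V V0 :: "'v set" and E :: "('v \<times> 'v) set" and pr :: "'v \<Rightarrow> nat"
  assumes pg: "parity_game V V0 E pr" and Vne: "V \<noteq> {}"
begin

lemmas WVp = WV[OF pg] and finWp = finW[OF pg] and FEp = FE[OF pg] and a2p = a2[OF pg]
  and Atopp = Atop[OF pg] and tgt_subp = tgt_sub[OF pg] and TTokp = TTok[OF pg]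
  and subV_nextp = subV_next[OF pg]

lemma subV_empty: "sub_V V Map.empty = V" by (simp add: sub_V_def)

lemma game_ok_empty: "game_ok V E Map.empty"
  unfolding game_ok_def subV_empty using succV[OF pg] EV[OF pg] by blast

lemma esc_subV: "tangle_escapes V V0 E pr C \<subseteq> V"
  using EV[OF pg] unfolding tangle_escapes_def by blast

lemma past_ok_empty: "past_ok V V0 E pr T Map.empty"
  unfolding past_ok_def subV_empty using esc_subV by blast

lemma sinv_init: "goodT V V0 E pr T \<Longrightarrow> sinv V V0 E pr (Loop T Map.empty {})"
  unfolding sinv_def using game_ok_empty past_ok_empty Vne subV_empty
  by (simp add: goodT_def)

lemma sinv_step:
  assumes inv: "sinv V V0 E pr s" and st: "search_step V V0 E pr s s'"
  shows "sinv V V0 E pr s'"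
  using st
proof (cases rule: search_step.cases)
  case (loop_enter r T Y)
  thus ?thesis using inv attr_inv_init[OF tgt_subp] unfolding sinv_def by simp
next
  case (loop_done r T Y)
  have "goodT V V0 E pr T" "goodT V V0 E pr Y" using inv loop_done unfolding sinv_def by simp_all
  hence "goodT V V0 E pr (T \<union> Y)" unfolding goodT_def by blast
  thus ?thesis using loop_done game_ok_empty past_ok_empty Vne subV_empty unfolding sinv_def
    by (simp add: goodT_def)
next
  case (attr r T Z \<sigma> Z' \<sigma>' Y)
  have i: "goodT V V0 E pr T" "goodT V V0 E pr Y" "game_ok V E r" "past_ok V V0 E pr T r"
         "sub_V V r \<noteq> {}"
         "attr_inv (sub_V V r) V0 (sub_E V E r) pr (sub_top V pr r mod 2) (sub_target V pr r) Z \<sigma>"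
    using inv attr(1) unfolding sinv_def by simp_all
  have "attr_inv (sub_V V r) V0 (sub_E V E r) pr (sub_top V pr r mod 2) (sub_target V pr r) Z' \<sigma>'"
    by (rule attr_inv_step[OF i(6) attr(3) finWp TTokp[OF i(1)] WVp FEp a2p])
  thus ?thesis using i attr(2) unfolding sinv_def by simp
next
  case (attr_return r T Z \<sigma> t Y)
  have i: "attr_inv (sub_V V r) V0 (sub_E V E r) pr (sub_top V pr r mod 2) (sub_target V pr r) Z \<sigma>"
    using inv attr_return(1) unfolding sinv_def by simp
  have "tangle_witness V V0 E pr (fst t) (snd t)"
    by (rule extract_tangle(2)[OF i WVp FEp a2p Atopp finWp attr_return(4)])
  thus ?thesis using attr_return unfolding sinv_def by simp
next
  case (attr_next r T Z \<sigma> Y)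
  define W where "W = sub_V V r"
  define X where "X = extract_tangles (sub_V V r) V0 (sub_E V E r) (sub_top V pr r mod 2) Z \<sigma>"
  define r' where "r' = (\<lambda>v. if v \<in> Z then Some (sub_top V pr r) else r v)"
  have i: "goodT V V0 E pr T" "goodT V V0 E pr Y" "game_ok V E r" "past_ok V V0 E pr T r"
         "sub_V V r \<noteq> {}"
         and ainv: "attr_inv (sub_V V r) V0 (sub_E V E r) pr (sub_top V pr r mod 2) (sub_target V pr r) Z \<sigma>"
    using inv attr_next(1) unfolding sinv_def by simp_all
  have trm: "\<forall>s'. \<not> attr_step (sub_V V r) V0 (sub_E V E r) pr (sub_T V T r) (sub_top V pr r mod 2)
                 (sub_target V pr r) (Z, \<sigma>) s'" by (rule attr_next(3))
  have escs: "\<forall>t\<in>X. tangle_escapes V V0 E pr (fst t) \<noteq> {}" using attr_next(4) unfolding X_def .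
  have gX: "goodT V V0 E pr X" unfolding goodT_def X_def
    using extract_tangle(2)[OF ainv WVp FEp a2p Atopp finWp] by blast
  have gY': "goodT V V0 E pr (Y \<union> X)" using gX i(2) unfolding goodT_def by blast
  have g': "game_ok V E r'" unfolding r'_def by (rule next_game[OF pg i(3) trm])
  have p': "past_ok V V0 E pr T r'" unfolding r'_def by (rule next_past[OF pg i(4) i(1) trm])
  have last: "\<not> (Y \<union> X) \<subseteq> T" if "sub_V V r' = {}"
  proof -
    have ZW: "Z \<subseteq> sub_V V r" using ainv unfolding attr_inv_def by blast
    have "sub_V V r' = sub_V V r - Z" unfolding r'_def by (rule subV_nextp)
    hence ZeqW: "Z = sub_V V r" using that ZW by blast
    have gm: "\<forall>v\<in>sub_V V r. \<exists>w\<in>sub_V V r. (v,w) \<in> E" using i(3) unfolding game_ok_def .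
    have "X \<noteq> {}" unfolding X_def
      by (rule extract_nonempty[OF ainv WVp FEp a2p Atopp finWp trm ZeqW i(5) gm])
    then obtain e where e: "e \<in> X" by blast
    have "e \<notin> T" using ext_notin[OF pg i(4) ainv e[unfolded X_def]] escs e by blast
    thus ?thesis using e by blast
  qed
  show ?thesis using attr_next(2) gY' g' p' last i(1) unfolding sinv_def r'_def[symmetric] X_def[symmetric]
    by simp
qed

end


lemma attr_step_grow:
  assumes "attr_step W V0 F pr TT a A (Z,\<sigma>) (Z',\<sigma>')"
  shows "Z \<subseteq> Z' \<and> dom \<sigma> \<subseteq> dom \<sigma>' \<and> (Z \<subset> Z' \<or> dom \<sigma> \<subset> dom \<sigma>')"
  using assms
proof cases
  case (target_strat a0 w) thus ?thesis by auto
next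
  case (add_own v w) thus ?thesis by auto
next
  case (add_opp v) thus ?thesis by auto
next
  case (add_tangle t \<tau>)
  have "dom \<sigma> \<subseteq> dom \<sigma>'" using add_tangle by (auto simp: dom_def)
  thus ?thesis using add_tangle by auto
qed

lemma no_step_Return: "\<not> search_step V V0 E pr (Return x y) s'"
  by (auto elim: search_step.cases)

definition Uset :: "'v set \<Rightarrow> ('v set \<times> ('v \<rightharpoonup> 'v)) set" where
  "Uset V = {p. fst p \<subseteq> V \<and> dom (snd p) \<subseteq> V \<and> ran (snd p) \<subseteq> V}"

lemma finite_Uset: "finite V \<Longrightarrow> finite (Uset V)"
proof -
  assume fV: "finite V"
  have "{m :: 'a \<rightharpoonup> 'a. dom m \<subseteq> V \<and> ran m \<subseteq> V} = (\<Union>A\<in>Pow V. {m. dom m = A \<and> ran m \<subseteq> V})" by auto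
  moreover have "finite (\<Union>A\<in>Pow V. {m :: 'a \<rightharpoonup> 'a. dom m = A \<and> ran m \<subseteq> V})"
  proof (rule finite_UN_I)
    show "finite (Pow V)" using fV by simp
    fix A assume "A \<in> Pow V"
    hence "finite A" using fV finite_subset by blast
    thus "finite {m :: 'a \<rightharpoonup> 'a. dom m = A \<and> ran m \<subseteq> V}" by (rule finite_set_of_finite_maps[OF _ fV])
  qed
  ultimately have fM: "finite {m :: 'a \<rightharpoonup> 'a. dom m \<subseteq> V \<and> ran m \<subseteq> V}" by simp
  have "Uset V \<subseteq> Pow V \<times> {m. dom m \<subseteq> V \<and> ran m \<subseteq> V}" unfolding Uset_def by auto
  moreover have "finite (Pow V \<times> {m :: 'a \<rightharpoonup> 'a. dom m \<subseteq> V \<and> ran m \<subseteq> V})" using fV fM by simp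
  ultimately show ?thesis by (rule finite_subset)
qed

fun Tof :: "'v search_state \<Rightarrow> ('v set \<times> ('v \<rightharpoonup> 'v)) set" where
  "Tof (Loop T r Y) = T" | "Tof (Attr T r Y Z \<sigma>) = T" | "Tof (Return T t) = {}"

fun f2 :: "'v set \<Rightarrow> 'v search_state \<Rightarrow> nat" where
  "f2 V (Loop T r Y) = 2 * card (sub_V V r) + 1" | "f2 V (Attr T r Y Z \<sigma>) = 2 * card (sub_V V r)"
| "f2 V (Return T t) = 0"

fun f3 :: "'v set \<Rightarrow> 'v search_state \<Rightarrow> nat" where
  "f3 V (Attr T r Y Z \<sigma>) = (card V - card Z) + (card V - card (dom \<sigma>))" | "f3 V _ = 0"

context
  fixes V V0 :: "'v set" and E :: "('v \<times> 'v) set" and pr :: "'v \<Rightarrow> nat"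
  assumes pg: "parity_game V V0 E pr" and Vne: "V \<noteq> {}"
begin

lemma finVp: "finite V" using finV[OF pg] .

lemma goodT_U: assumes "goodT V V0 E pr T" shows "T \<subseteq> Uset V"
proof
  fix p assume "p \<in> T"
  hence tw: "tangle_witness V V0 E pr (fst p) (snd p)" using assms unfolding goodT_def by blast
  have "fst p \<subseteq> V" "dom (snd p) \<subseteq> fst p" "ran (snd p) \<subseteq> fst p"
    using tw unfolding tangle_witness_def Let_def by auto
  thus "p \<in> Uset V" unfolding Uset_def by auto
qed

definition meas where "meas = measures [\<lambda>s. card (Uset V) - card (Tof s), f2 V, f3 V]"

lemma decr:
  assumes i: "sinv V V0 E pr s" and i': "sinv V V0 E pr s'" and st: "search_step V V0 E pr s s'"
    and nr: "\<forall>x y. s' \<noteq> Return x y"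
  shows "(s', s) \<in> meas"
  using st
proof (cases rule: search_step.cases)
  case (loop_enter r T Y) thus ?thesis unfolding meas_def by simp
next
  case (loop_done r T Y)
  have g: "goodT V V0 E pr T" "goodT V V0 E pr Y" "\<not> Y \<subseteq> T"
    using i loop_done unfolding sinv_def by simp_all
  have fU: "finite (Uset V)" by (rule finite_Uset[OF finVp])
  have TU: "T \<union> Y \<subseteq> Uset V" using goodT_U g(1,2) by blast
  have fTY: "finite (T \<union> Y)" using TU fU by (rule finite_subset)
  have "T \<subset> T \<union> Y" using g(3) by blast
  hence "card T < card (T \<union> Y)" by (rule psubset_card_mono[OF fTY])
  moreover have "card (T \<union> Y) \<le> card (Uset V)" using TU fU by (rule card_mono[rotated])
  moreover have "Tof s = T" "Tof s' = T \<union> Y" using loop_done(1,2) by simp_all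
  ultimately have "card (Uset V) - card (Tof s') < card (Uset V) - card (Tof s)" by simp
  thus ?thesis unfolding meas_def by simp
next
  case (attr r T Z \<sigma> Z' \<sigma>' Y)
  have gr: "Z \<subseteq> Z' \<and> dom \<sigma> \<subseteq> dom \<sigma>' \<and> (Z \<subset> Z' \<or> dom \<sigma> \<subset> dom \<sigma>')"
    by (rule attr_step_grow[OF attr(3)])
  have ai: "attr_inv (sub_V V r) V0 (sub_E V E r) pr (sub_top V pr r mod 2) (sub_target V pr r) Z' \<sigma>'"
    using i' attr(2) unfolding sinv_def by simp
  have Z'V: "Z' \<subseteq> V" and d'V: "dom \<sigma>' \<subseteq> V"
    using ai WV[OF pg, of r] unfolding attr_inv_def by blast+
  have fZ': "finite Z'" and fd': "finite (dom \<sigma>')" using Z'V d'V finVp finite_subset by blast+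
  have c1: "card Z \<le> card Z'" "card (dom \<sigma>) \<le> card (dom \<sigma>')"
    using gr card_mono[OF fZ'] card_mono[OF fd'] by blast+
  have c2: "card Z' \<le> card V" "card (dom \<sigma>') \<le> card V"
    using card_mono[OF finVp Z'V] card_mono[OF finVp d'V] by blast+
  have c3: "card Z < card Z' \<or> card (dom \<sigma>) < card (dom \<sigma>')"
  proof -
    have "Z \<subset> Z' \<or> dom \<sigma> \<subset> dom \<sigma>'" using gr by blast
    thus ?thesis
    proof
      assume "Z \<subset> Z'" thus ?thesis using psubset_card_mono[OF fZ'] by blast
    next
      assume "dom \<sigma> \<subset> dom \<sigma>'" thus ?thesis using psubset_card_mono[OF fd'] by blast
    qed
  qed
  have "(card V - card Z') + (card V - card (dom \<sigma>')) < (card V - card Z) + (card V - card (dom \<sigma>))"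
    using c1 c2 c3 by linarith
  hence "f3 V s' < f3 V s" using attr(1,2) by simp
  moreover have "Tof s' = Tof s" "f2 V s' = f2 V s" using attr(1,2) by simp_all
  ultimately show ?thesis unfolding meas_def by simp
next
  case (attr_return r T Z \<sigma> t Y) thus ?thesis using nr by simp
next
  case (attr_next r T Z \<sigma> Y)
  have ai: "attr_inv (sub_V V r) V0 (sub_E V E r) pr (sub_top V pr r mod 2) (sub_target V pr r) Z \<sigma>"
    and ne: "sub_V V r \<noteq> {}" using i attr_next(1) unfolding sinv_def by simp_all
  have AZ: "sub_target V pr r \<subseteq> Z" using ai unfolding attr_inv_def by blast
  obtain x where x: "x \<in> sub_target V pr r" using tgt_ne[OF pg ne] by blast
  have "x \<in> sub_V V r" "x \<in> Z" using x AZ tgt_sub[OF pg] by blast+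
  hence "sub_V V r - Z \<subset> sub_V V r" by blast
  hence "card (sub_V V r - Z) < card (sub_V V r)" using finW[OF pg] by (rule psubset_card_mono[rotated])
  moreover have "sub_V V (\<lambda>v. if v \<in> Z then Some (sub_top V pr r) else r v) = sub_V V r - Z"
    by (rule subV_next[OF pg])
  ultimately have "f2 V s' < f2 V s" using attr_next(1,2) by simp
  moreover have "Tof s' = Tof s" using attr_next(1,2) by simp
  ultimately show ?thesis unfolding meas_def by simp
qed

end


theorem lemma9:
  fixes V V0 :: "'v set" and E :: "('v \<times> 'v) set" and pr :: "'v \<Rightarrow> nat"
    and T :: "('v set \<times> ('v \<rightharpoonup> 'v)) set"
  assumes "parity_game V V0 E pr"
    and "V \<noteq> {}"
    and "finite T"
    and "\<forall>(U, \<tau>) \<in> T. tangle_witness V V0 E pr U \<tau>"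
  shows "\<not> (\<exists>f. f 0 = Loop T Map.empty {} \<and> (\<forall>i. search_step V V0 E pr (f i) (f (Suc i))))
    \<and> (\<forall>s. (search_step V V0 E pr)\<^sup>*\<^sup>* (Loop T Map.empty {}) s \<and> \<not> (\<exists>s'. search_step V V0 E pr s s')
          \<longrightarrow> (\<exists>T'' t. s = Return T'' t \<and> is_tangle V V0 E pr (fst t)
                     \<and> dominion V V0 E pr (Max (pr ` fst t) mod 2) (fst t)))"
proof -
  note pg = assms(1) and Vne = assms(2)
  have gT: "goodT V V0 E pr T" using assms(4) unfolding goodT_def by auto
  have init: "sinv V V0 E pr (Loop T Map.empty {})" by (rule sinv_init[OF pg Vne gT])
  have reach: "sinv V V0 E pr s" if "(search_step V V0 E pr)\<^sup>*\<^sup>* (Loop T Map.empty {}) s" for s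
    using that
  proof (induction rule: rtranclp_induct)
    case base show ?case by (rule init)
  next
    case (step y z) thus ?case using sinv_step[OF pg Vne] by blast
  qed
  have part1: "\<not> (\<exists>f. f 0 = Loop T Map.empty {} \<and> (\<forall>i. search_step V V0 E pr (f i) (f (Suc i))))"
  proof
    assume "\<exists>f. f 0 = Loop T Map.empty {} \<and> (\<forall>i. search_step V V0 E pr (f i) (f (Suc i)))"
    then obtain f where f0: "f 0 = Loop T Map.empty {}" and fs: "\<forall>i. search_step V V0 E pr (f i) (f (Suc i))"
      by blast
    have sv: "sinv V V0 E pr (f i)" for i
    proof (induction i)
      case 0 show ?case using init f0 by simp
    next
      case (Suc i) show ?case by (rule sinv_step[OF pg Vne Suc fs[rule_format, of i]])
    qed
    have nr: "\<forall>x y. f (Suc i) \<noteq> Return x y" for i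
      using fs[rule_format, of "Suc i"] no_step_Return by metis
    have "(f (Suc i), f i) \<in> measures [\<lambda>s. card (Uset V) - card (Tof s), f2 V, f3 V]" for i
      using decr[OF pg Vne sv[of i] sv[of "Suc i"] fs[rule_format, of i] nr[of i], unfolded meas_def[OF pg Vne]] .
    hence "\<exists>f. \<forall>i. (f (Suc i), f i) \<in> measures [\<lambda>s. card (Uset V) - card (Tof s), f2 V, f3 V]" by blast
    thus False using wf_measures[of "[\<lambda>s. card (Uset V) - card (Tof s), f2 V, f3 V]"]
      unfolding wf_iff_no_infinite_down_chain by blast
  qed
  have part2: "\<exists>T'' t. s = Return T'' t \<and> is_tangle V V0 E pr (fst t)
                     \<and> dominion V V0 E pr (Max (pr ` fst t) mod 2) (fst t)"
    if rs: "(search_step V V0 E pr)\<^sup>*\<^sup>* (Loop T Map.empty {}) s" and nt: "\<not> (\<exists>s'. search_step V V0 E pr s s')" for s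
  proof -
    have si: "sinv V V0 E pr s" by (rule reach[OF rs])
    show ?thesis
    proof (cases s)
      case (Loop T' r Y)
      show ?thesis
      proof (cases "sub_V V r = {}")
        case True
        hence "search_step V V0 E pr s (Loop (T' \<union> Y) Map.empty {})" using Loop by (simp add: search_step.loop_done)
        thus ?thesis using nt by blast
      next
        case False
        hence "search_step V V0 E pr s (Attr T' r Y (sub_target V pr r) Map.empty)"
          using Loop by (simp add: search_step.loop_enter)
        thus ?thesis using nt by blast
      qed
    next
      case (Attr T' r Y Z \<sigma>)
      show ?thesis
      proof (cases "\<exists>s'. attr_step (sub_V V r) V0 (sub_E V E r) pr (sub_T V T' r) (sub_top V pr r mod 2)
                 (sub_target V pr r) (Z, \<sigma>) s'")
        case True
        then obtain Z' \<sigma>' where "attr_step (sub_V V r) V0 (sub_E V E r) pr (sub_T V T' r) (sub_top V pr r mod 2)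
                 (sub_target V pr r) (Z, \<sigma>) (Z', \<sigma>')" by (metis surj_pair)
        hence "search_step V V0 E pr s (Attr T' r Y Z' \<sigma>')" using Attr by (simp add: search_step.attr)
        thus ?thesis using nt by blast
      next
        case False
        hence trm: "\<forall>s'. \<not> attr_step (sub_V V r) V0 (sub_E V E r) pr (sub_T V T' r) (sub_top V pr r mod 2)
                 (sub_target V pr r) (Z, \<sigma>) s'" by blast
        show ?thesis
        proof (cases "\<exists>t \<in> extract_tangles (sub_V V r) V0 (sub_E V E r) (sub_top V pr r mod 2) Z \<sigma>.
                        tangle_escapes V V0 E pr (fst t) = {}")
          case True
          then obtain t where "t \<in> extract_tangles (sub_V V r) V0 (sub_E V E r) (sub_top V pr r mod 2) Z \<sigma>"
            "tangle_escapes V V0 E pr (fst t) = {}" by blast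
          hence "search_step V V0 E pr s (Return (T' \<union> Y) t)"
            using Attr trm by (simp add: search_step.attr_return)
          thus ?thesis using nt by blast
        next
          case False
          hence "\<forall>t \<in> extract_tangles (sub_V V r) V0 (sub_E V E r) (sub_top V pr r mod 2) Z \<sigma>.
                        tangle_escapes V V0 E pr (fst t) \<noteq> {}" by blast
          hence "search_step V V0 E pr s
             (Loop T' (\<lambda>v. if v \<in> Z then Some (sub_top V pr r) else r v)
             (Y \<union> extract_tangles (sub_V V r) V0 (sub_E V E r) (sub_top V pr r mod 2) Z \<sigma>))"
            using Attr trm by (simp add: search_step.attr_next)
          thus ?thesis using nt by blast
        qed
      qed
    next
      case (Return T'' t)
      have tw: "tangle_witness V V0 E pr (fst t) (snd t)" and esc: "tangle_escapes V V0 E pr (fst t) = {}"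
        using si Return unfolding sinv_def by simp_all
      have "is_tangle V V0 E pr (fst t)" unfolding is_tangle_def using tw by blast
      moreover have "dominion V V0 E pr (Max (pr ` fst t) mod 2) (fst t)"
        by (rule tangle_dominion[OF pg tw esc])
      ultimately show ?thesis using Return by blast
    qed
  qed
  show ?thesis using part1 part2 by blast
qed


end
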